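(* Let $G$ be a digraph, $\mathbf{U}=\mathbf{S}_1\cdots\mathbf{S}_n$ a normalized unit decomposition of $G$ of slice-width $q$ and zig-zag number $z$, $\mathcal{SG}$ a normalized $z$-dilated-saturated slice graph over $\Sigma^{c,q}$, and $\mathcal{N}^q(\mathcal{SG})$ its $q$-numbering expansion. Then the set of sub-unit-decompositions of $\mathbf{U}$ of slice-width at most $c$ whose composition is a digraph isomorphic to some digraph in $\mathcal{L}_{\mathcal{G}}(\mathcal{SG})$ is exactly the regular slice language $\mathcal{L}(\mathcal{SUB}^c(\mathbf{U}))\cap\mathcal{L}(\mathcal{N}^q(\mathcal{SG}))$.
   Context: Slice: finite digraph with vertex set partitioned into in-frontier $I$, center and out-frontier $O$, each frontier vertex incident to exactly one edge, no edge inside a frontier, edge orientations $\pm1$, frontier vertices numbered injectively per frontier with numbers in $\{1,\dots,q\}$; normalized if frontier numbers are $\{1,\dots,|I|\}$ and $\{1,\dots,|O|\}$; width $\max\{|I|,|O|\}$; unit slice: at most one center vertex; permutation slice: no center vertex. Gluing $\circ$ fuses edges at equally numbered out-/in-frontier vertices (number sets and orientations must match). $\Sigma^{c,q}$: unit slices of width $\le c$ with frontier numbers in $\{1,\dots,q\}$. (Dilated) unit decomposition of $H$: word of unit slices, first initial, last final, consecutive gluable, composing to $H$; slice-width = maximal width of its slices. Slice graph: finite directed graph with initial and final vertices labelled by unit slices consistently (initial/final/gluable along edges); $\mathcal{L}(\mathcal{SG})$ = label words of walks from initial to final vertices; $\mathcal{L}_{\mathcal{G}}(\mathcal{SG})$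 = their compositions. Sub-slice: subgraph of a slice that is a slice, with inherited numbering; sub-unit-decomposition of $\mathbf{U}=\mathbf{S}_1\cdots\mathbf{S}_n$: unit decomposition $\mathbf{S}'_1\cdots\mathbf{S}'_n$ of a subgraph of $G$ with $\mathbf{S}'_i$ a sub-slice of $\mathbf{S}_i$. $\mathcal{SUB}^c(\mathbf{U})$: a slice graph whose language is the set of all sub-unit-decompositions of $\mathbf{U}$ of slice-width at most $c$. Zig-zag number: a vertex ordering $(v_1,\dots,v_n)$ of $H$ is $z$-topological if every directed simple path has at most $z$ edges between $\{v_1..v_i\}$ and $\{v_{i+1}..v_n\}$ for each $i$; a dilated unit decomposition is compatible with it if $v_i$ is the center of the $j_i$-th slice with $j_1<\dots<j_n$; it has zig-zag number at most $z$ if compatible with a $z$-topological ordering. A slice graph is $z$-dilated-saturated if all words of its language have zig-zag number at most $z$ and, for every $H\in\mathcal{L}_{\mathcal{G}}(\mathcal{SG})$, every dilated unit decomposition of $H$ compatible with any $z$-topological ordering of $H$ lies in $\mathcal{L}(\mathcal{SG})$. $q$-numbering of a normalized slice: pair of strictly increasing maps $in,out$ from the in-/out-frontier numbers into $\{1,\dots,q\}$; $(\mathbf{S},in,out)$ is the renumbered slice. $\mathcal{N}^q(\mathcal{SG})$: vertices $\mathfrak{v}_{in,out}$ labelled $(\mathbf{S}(\mathfrak{v}),in,out)$ for every vertex $\mathfrak{v}$ and $q$-numbering, edges between $\mathfrak{v}_{in,out}$ and $\mathfrak{v}'_{in',out'}$ iff $(\mathfrak{v},\mathfrak{v}')$ is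 an edge of $\mathcal{SG}$ and the renumbered slices are gluable. *)

theory Defs
  imports Main
begin

record ('v,'e) digraph =
  dV :: "'v set"
  dE :: "'e set"
  dtail :: "'e \<Rightarrow> 'v"
  dhead :: "'e \<Rightarrow> 'v"

definition is_digraph :: "('v,'e) digraph \<Rightarrow> bool" where
  "is_digraph G \<longleftrightarrow> finite (dV G) \<and> finite (dE G) \<and>
     (\<forall>e\<in>dE G. dtail G e \<in> dV G \<and> dhead G e \<in> dV G)"

definition digraph_iso_via ::
  "('v \<Rightarrow> 'w) \<Rightarrow> ('e \<Rightarrow> 'f) \<Rightarrow> ('v,'e) digraph \<Rightarrow> ('w,'f) digraph \<Rightarrow> bool" where
  "digraph_iso_via f g G H \<longleftrightarrow> bij_betw f (dV G) (dV H) \<and> bij_betw g (dE G) (dE H) \<and>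
     (\<forall>e\<in>dE G. dtail H (g e) = f (dtail G e) \<and> dhead H (g e) = f (dhead G e))"

definition digraph_iso :: "('v,'e) digraph \<Rightarrow> ('w,'f) digraph \<Rightarrow> bool" where
  "digraph_iso G H \<longleftrightarrow> (\<exists>f g. digraph_iso_via f g G H)"

text \<open>The orientation
  (+1/-1) of an edge is encoded by its direction (tail/head).\<close>

record ('v,'e) slice =
  sIn :: "'v set"
  sCen :: "'v set"
  sOut :: "'v set"
  sEdges :: "'e set"
  stail :: "'e \<Rightarrow> 'v"
  shead :: "'e \<Rightarrow> 'v"
  snum :: "'v \<Rightarrow> nat"

definition sVerts :: "('v,'e) slice \<Rightarrow> 'v set" where
  "sVerts S = sIn S \<union> sCen S \<union> sOut S"

definition is_slice :: "('v,'e) slice \<Rightarrow> bool" where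
  "is_slice S \<longleftrightarrow>
     finite (sVerts S) \<and> finite (sEdges S) \<and>
     sIn S \<inter> sCen S = {} \<and> sIn S \<inter> sOut S = {} \<and> sCen S \<inter> sOut S = {} \<and>
     (\<forall>e\<in>sEdges S. stail S e \<in> sVerts S \<and> shead S e \<in> sVerts S) \<and>
     (\<forall>v\<in>sIn S \<union> sOut S. card {e\<in>sEdges S. stail S e = v \<or> shead S e = v} = 1) \<and>
     (\<forall>e\<in>sEdges S. \<not> (stail S e \<in> sIn S \<and> shead S e \<in> sIn S) \<and>
                    \<not> (stail S e \<in> sOut S \<and> shead S e \<in> sOut S)) \<and>
     inj_on (snum S) (sIn S) \<and> inj_on (snum S) (sOut S) \<and>
     (\<forall>v\<in>sIn S \<union> sOut S. 1 \<le> snum S v)"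

definition normalized_slice :: "('v,'e) slice \<Rightarrow> bool" where
  "normalized_slice S \<longleftrightarrow> snum S ` sIn S = {1..card (sIn S)} \<and> snum S ` sOut S = {1..card (sOut S)}"

definition slice_width :: "('v,'e) slice \<Rightarrow> nat" where
  "slice_width S = max (card (sIn S)) (card (sOut S))"

definition unit_slice :: "('v,'e) slice \<Rightarrow> bool" where
  "unit_slice S \<longleftrightarrow> is_slice S \<and> card (sCen S) \<le> 1"

definition initial_slice :: "('v,'e) slice \<Rightarrow> bool" where
  "initial_slice S \<longleftrightarrow> sIn S = {}"

definition final_slice :: "('v,'e) slice \<Rightarrow> bool" where
  "final_slice S \<longleftrightarrow> sOut S = {}"

definition gluable :: "('v,'e) slice \<Rightarrow> ('v,'e) slice \<Rightarrow> bool" where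
  "gluable S T \<longleftrightarrow> snum S ` sOut S = snum T ` sIn T \<and>
     (\<forall>x\<in>sOut S. \<forall>y\<in>sIn T. snum S x = snum T y \<longrightarrow>
        ((\<exists>e\<in>sEdges S. shead S e = x) \<longleftrightarrow> (\<exists>e\<in>sEdges T. stail T e = y)))"

definition Sigma :: "nat \<Rightarrow> nat \<Rightarrow> ('v,'e) slice set" where
  "Sigma c q = {S. unit_slice S \<and> slice_width S \<le> c \<and> snum S ` (sIn S \<union> sOut S) \<subseteq> {1..q}}"

text \<open>Slice isomorphism (slices as alphabet symbols are taken up to isomorphism
  preserving the frontier partition, the numbering and the edge directions).\<close>

definition slice_iso :: "('v,'e) slice \<Rightarrow> ('w,'f) slice \<Rightarrow> bool" where
  "slice_iso S T \<longleftrightarrow> (\<exists>f g. bij_betw f (sVerts S) (sVerts T) \<and> bij_betw g (sEdges S) (sEdges T) \<and>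
      f ` sIn S = sIn T \<and> f ` sCen S = sCen T \<and> f ` sOut S = sOut T \<and>
      (\<forall>v\<in>sIn S \<union> sOut S. snum T (f v) = snum S v) \<and>
      (\<forall>e\<in>sEdges S. stail T (g e) = f (stail S e) \<and> shead T (g e) = f (shead S e)))"

definition word_iso :: "('v,'e) slice list \<Rightarrow> ('w,'f) slice list \<Rightarrow> bool" where
  "word_iso W W' \<longleftrightarrow> length W = length W' \<and> (\<forall>i<length W. slice_iso (W!i) (W'!i))"

text \<open>\<open>reach W (i,e) (j,w)\<close>: following the chain of fused edges starting with edge
  \<open>e\<close> of the \<open>i\<close>-th slice (from its tail towards its head) one arrives at center
  vertex \<open>w\<close> of the \<open>j\<close>-th slice.\<close>

inductive reach :: "('v,'e) slice list \<Rightarrow> nat \<times> 'e \<Rightarrow> nat \<times> 'v \<Rightarrow> bool" for W where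
  here: "i < length W \<Longrightarrow> e \<in> sEdges (W!i) \<Longrightarrow> shead (W!i) e \<in> sCen (W!i)
          \<Longrightarrow> reach W (i,e) (i, shead (W!i) e)"
| right: "i < length W \<Longrightarrow> e \<in> sEdges (W!i) \<Longrightarrow> shead (W!i) e \<in> sOut (W!i) \<Longrightarrow>
          Suc i < length W \<Longrightarrow> e' \<in> sEdges (W!Suc i) \<Longrightarrow> stail (W!Suc i) e' \<in> sIn (W!Suc i) \<Longrightarrow>
          snum (W!Suc i) (stail (W!Suc i) e') = snum (W!i) (shead (W!i) e) \<Longrightarrow>
          reach W (Suc i, e') r \<Longrightarrow> reach W (i,e) r"
| left: "i < length W \<Longrightarrow> e \<in> sEdges (W!i) \<Longrightarrow> shead (W!i) e \<in> sIn (W!i) \<Longrightarrow>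
          0 < i \<Longrightarrow> e' \<in> sEdges (W!(i-1)) \<Longrightarrow> stail (W!(i-1)) e' \<in> sOut (W!(i-1)) \<Longrightarrow>
          snum (W!(i-1)) (stail (W!(i-1)) e') = snum (W!i) (shead (W!i) e) \<Longrightarrow>
          reach W (i-1, e') r \<Longrightarrow> reach W (i,e) r"

text \<open>The composed digraph: vertices are the center vertices (tagged by slice index);
  each edge of the composition is identified with its first segment, the slice edge
  leaving its tail.\<close>

definition compose :: "('v,'e) slice list \<Rightarrow> (nat \<times> 'v, nat \<times> 'e) digraph" where
  "compose W = \<lparr> dV = {(i,v). i < length W \<and> v \<in> sCen (W!i)},
                 dE = {(i,e). i < length W \<and> e \<in> sEdges (W!i) \<and> stail (W!i) e \<in> sCen (W!i)},
                 dtail = (\<lambda>(i,e). (i, stail (W!i) e)),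
                 dhead = (\<lambda>p. THE r. reach W p r) \<rparr>"

definition is_unit_decomp :: "('v,'e) slice list \<Rightarrow> bool" where
  "is_unit_decomp W \<longleftrightarrow> W \<noteq> [] \<and> (\<forall>S\<in>set W. unit_slice S) \<and>
     initial_slice (hd W) \<and> final_slice (last W) \<and>
     (\<forall>i. Suc i < length W \<longrightarrow> gluable (W!i) (W!Suc i))"

definition is_unit_decomp_of :: "('v,'e) slice list \<Rightarrow> ('a,'b) digraph \<Rightarrow> bool" where
  "is_unit_decomp_of W G \<longleftrightarrow> is_unit_decomp W \<and> digraph_iso (compose W) G"

definition word_width :: "('v,'e) slice list \<Rightarrow> nat" where
  "word_width W = Max (slice_width ` set W)"

definition normalized_word :: "('v,'e) slice list \<Rightarrow> bool" where
  "normalized_word W \<longleftrightarrow> (\<forall>S\<in>set W. normalized_slice S)"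

definition sub_slice :: "('v,'e) slice \<Rightarrow> ('v,'e) slice \<Rightarrow> bool" where
  "sub_slice S' S \<longleftrightarrow> is_slice S' \<and> sVerts S' \<subseteq> sVerts S \<and>
     sIn S' = sIn S \<inter> sVerts S' \<and> sCen S' = sCen S \<inter> sVerts S' \<and> sOut S' = sOut S \<inter> sVerts S' \<and>
     sEdges S' \<subseteq> sEdges S \<and> stail S' = stail S \<and> shead S' = shead S \<and> snum S' = snum S"

definition sub_unit_decomp :: "('v,'e) slice list \<Rightarrow> ('v,'e) slice list \<Rightarrow> bool" where
  "sub_unit_decomp W' W \<longleftrightarrow> is_unit_decomp W' \<and> length W' = length W \<and>
     (\<forall>i<length W. sub_slice (W'!i) (W!i))"

definition sub_unit_decomps :: "nat \<Rightarrow> ('v,'e) slice list \<Rightarrow> ('v,'e) slice list set" where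
  "sub_unit_decomps c W = {W'. sub_unit_decomp W' W \<and> word_width W' \<le> c}"

definition is_simple_path :: "('v,'e) digraph \<Rightarrow> 'e list \<Rightarrow> bool" where
  "is_simple_path H es \<longleftrightarrow> es \<noteq> [] \<and> set es \<subseteq> dE H \<and>
     (\<forall>j. Suc j < length es \<longrightarrow> dhead H (es!j) = dtail H (es!Suc j)) \<and>
     distinct (dtail H (hd es) # map (dhead H) es)"

definition z_topological :: "nat \<Rightarrow> ('v,'e) digraph \<Rightarrow> 'v list \<Rightarrow> bool" where
  "z_topological z H ord \<longleftrightarrow> distinct ord \<and> set ord = dV H \<and>
     (\<forall>es. is_simple_path H es \<longrightarrow> (\<forall>i.
        length (filter (\<lambda>e. (dtail H e \<in> set (take i ord)) \<noteq> (dhead H e \<in> set (take i ord))) es) \<le> z))"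

definition centers :: "('v,'e) slice list \<Rightarrow> (nat \<times> 'v) list" where
  "centers W = [(i, the_elem (sCen (W!i))). i \<leftarrow> [0..<length W], sCen (W!i) \<noteq> {}]"

text \<open>A (dilated) unit decomposition \<open>W\<close> of \<open>H\<close> is compatible with the ordering \<open>ord\<close>
  of \<open>H\<close> if, under an isomorphism of its composition onto \<open>H\<close>, the \<open>k\<close>-th vertex of
  \<open>ord\<close> is the center of the \<open>j_k\<close>-th slice with \<open>j_1 < j_2 < ...\<close>.\<close>

definition compatible :: "('v,'e) slice list \<Rightarrow> ('a,'b) digraph \<Rightarrow> 'a list \<Rightarrow> bool" where
  "compatible W H ord \<longleftrightarrow> (\<exists>f g. digraph_iso_via f g (compose W) H \<and> map f (centers W) = ord)"

definition zigzag_le :: "nat \<Rightarrow> ('v,'e) slice list \<Rightarrow> bool" where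
  "zigzag_le z W \<longleftrightarrow> (\<exists>ord. z_topological z (compose W) ord \<and> compatible W (compose W) ord)"

record ('n,'v,'e) slice_graph =
  sgV :: "'n set"
  sgE :: "('n \<times> 'n) set"
  sgI :: "'n set"
  sgF :: "'n set"
  sgL :: "'n \<Rightarrow> ('v,'e) slice"

definition is_slice_graph :: "('n,'v,'e) slice_graph \<Rightarrow> bool" where
  "is_slice_graph SG \<longleftrightarrow> finite (sgV SG) \<and> sgE SG \<subseteq> sgV SG \<times> sgV SG \<and>
     sgI SG \<subseteq> sgV SG \<and> sgF SG \<subseteq> sgV SG \<and>
     (\<forall>n\<in>sgV SG. unit_slice (sgL SG n)) \<and>
     (\<forall>n\<in>sgI SG. initial_slice (sgL SG n)) \<and>
     (\<forall>n\<in>sgF SG. final_slice (sgL SG n)) \<and>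
     (\<forall>(n,m)\<in>sgE SG. gluable (sgL SG n) (sgL SG m))"

definition slice_graph_over :: "nat \<Rightarrow> nat \<Rightarrow> ('n,'v,'e) slice_graph \<Rightarrow> bool" where
  "slice_graph_over c q SG \<longleftrightarrow> is_slice_graph SG \<and> (\<forall>n\<in>sgV SG. sgL SG n \<in> Sigma c q)"

definition normalized_slice_graph :: "('n,'v,'e) slice_graph \<Rightarrow> bool" where
  "normalized_slice_graph SG \<longleftrightarrow> (\<forall>n\<in>sgV SG. normalized_slice (sgL SG n))"

definition slang :: "('n,'v,'e) slice_graph \<Rightarrow> ('v,'e) slice list set" where
  "slang SG = {map (sgL SG) ns | ns. ns \<noteq> [] \<and> hd ns \<in> sgI SG \<and> last ns \<in> sgF SG \<and>
       set ns \<subseteq> sgV SG \<and> (\<forall>j. Suc j < length ns \<longrightarrow> (ns!j, ns!Suc j) \<in> sgE SG)}"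

definition graph_lang :: "('n,'v,'e) slice_graph \<Rightarrow> (nat \<times> 'v, nat \<times> 'e) digraph set" where
  "graph_lang SG = compose ` slang SG"

text \<open>Since slices are finite, every slice is isomorphic to one with
  vertices and edges in \<open>nat\<close>, so quantifying over \<open>(nat,nat) slice list\<close> covers
  all decompositions up to isomorphism.\<close>

definition normalized_dilated_saturated :: "nat \<Rightarrow> nat \<Rightarrow> nat \<Rightarrow> ('n,'v,'e) slice_graph \<Rightarrow> bool" where
  "normalized_dilated_saturated z c q SG \<longleftrightarrow>
     slice_graph_over c q SG \<and> normalized_slice_graph SG \<and>
     (\<forall>W\<in>slang SG. zigzag_le z W) \<and>
     (\<forall>H\<in>graph_lang SG. \<forall>ord. z_topological z H ord \<longrightarrow>
        (\<forall>W :: (nat,nat) slice list. is_unit_decomp W \<and> set W \<subseteq> Sigma c q \<and> normalized_word W \<and>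
            compatible W H ord \<longrightarrow> (\<exists>W'\<in>slang SG. word_iso W W')))"

definition qnumberings :: "nat \<Rightarrow> ('v,'e) slice \<Rightarrow> (nat list \<times> nat list) set" where
  "qnumberings q S = {(ins, outs). length ins = card (sIn S) \<and> sorted_wrt (<) ins \<and> set ins \<subseteq> {1..q} \<and>
                                   length outs = card (sOut S) \<and> sorted_wrt (<) outs \<and> set outs \<subseteq> {1..q}}"

definition renumber :: "('v,'e) slice \<Rightarrow> nat list \<Rightarrow> nat list \<Rightarrow> ('v,'e) slice" where
  "renumber S ins outs = S\<lparr> snum := (\<lambda>v. if v \<in> sIn S then ins ! (snum S v - 1)
                                           else if v \<in> sOut S then outs ! (snum S v - 1)
                                           else snum S v) \<rparr>"

definition Nq :: "nat \<Rightarrow> ('n,'v,'e) slice_graph \<Rightarrow> ('n \<times> nat list \<times> nat list,'v,'e) slice_graph" where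
  "Nq q SG = (let V = {(n,ins,outs). n \<in> sgV SG \<and> (ins,outs) \<in> qnumberings q (sgL SG n)};
                  L = (\<lambda>(n,ins,outs). renumber (sgL SG n) ins outs) in
     \<lparr> sgV = V,
       sgE = {(a,b). a \<in> V \<and> b \<in> V \<and> (fst a, fst b) \<in> sgE SG \<and> gluable (L a) (L b)},
       sgI = {a\<in>V. fst a \<in> sgI SG},
       sgF = {a\<in>V. fst a \<in> sgF SG},
       sgL = L \<rparr>)"

end

theory Submission
  imports Defs
begin


lemma slice_card1:
  assumes "is_slice S" "v \<in> sIn S \<union> sOut S"
  obtains a where "{e\<in>sEdges S. stail S e = v \<or> shead S e = v} = {a}"
proof -
  have "card {e\<in>sEdges S. stail S e = v \<or> shead S e = v} = 1"
    using assms(1,2) unfolding is_slice_def by blast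
  then show ?thesis using card_1_singletonE that by blast
qed

lemma slice_edge_unique:
  assumes "is_slice S" "v \<in> sIn S \<union> sOut S"
    "e1 \<in> sEdges S" "stail S e1 = v \<or> shead S e1 = v"
    "e2 \<in> sEdges S" "stail S e2 = v \<or> shead S e2 = v"
  shows "e1 = e2"
proof -
  obtain a where a: "{e\<in>sEdges S. stail S e = v \<or> shead S e = v} = {a}"
    using slice_card1[OF assms(1,2)] by blast
  have "e1 \<in> {e\<in>sEdges S. stail S e = v \<or> shead S e = v}" using assms(3,4) by simp
  hence "e1 = a" using a by simp
  moreover have "e2 \<in> {e\<in>sEdges S. stail S e = v \<or> shead S e = v}" using assms(5,6) by simp
  hence "e2 = a" using a by simp
  ultimately show ?thesis by simp
qed

lemma slice_edge_ex:
  assumes "is_slice S" "v \<in> sIn S \<union> sOut S"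
  shows "\<exists>e\<in>sEdges S. stail S e = v \<or> shead S e = v"
proof -
  obtain a where a: "{e\<in>sEdges S. stail S e = v \<or> shead S e = v} = {a}"
    using slice_card1[OF assms(1,2)] by blast
  have "a \<in> {e\<in>sEdges S. stail S e = v \<or> shead S e = v}" using a by simp
  thus ?thesis by blast
qed

lemma reach_cen: "reach W p r \<Longrightarrow> fst r < length W \<and> snd r \<in> sCen (W ! fst r)"
  by (induction rule: reach.induct) simp_all

lemma slice_disj: "is_slice S \<Longrightarrow> sIn S \<inter> sCen S = {} \<and> sIn S \<inter> sOut S = {} \<and> sCen S \<inter> sOut S = {}"
  unfolding is_slice_def by blast

lemma slice_inj_in: "is_slice S \<Longrightarrow> x \<in> sIn S \<Longrightarrow> y \<in> sIn S \<Longrightarrow> snum S x = snum S y \<Longrightarrow> x = y"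
  unfolding is_slice_def by (meson inj_onD)
lemma slice_inj_out: "is_slice S \<Longrightarrow> x \<in> sOut S \<Longrightarrow> y \<in> sOut S \<Longrightarrow> snum S x = snum S y \<Longrightarrow> x = y"
  unfolding is_slice_def by (meson inj_onD)

lemma reach_unique:
  assumes "reach W p r" "\<forall>S\<in>set W. is_slice S"
  shows "reach W p r' \<Longrightarrow> r = r'"
  using assms
proof (induction arbitrary: r' rule: reach.induct)
  case (here i e)
  have sl: "is_slice (W!i)" using here by auto
  from here.prems(1) show ?case
  proof (cases rule: reach.cases)
    case here thus ?thesis by simp
  next
    case right thus ?thesis using \<open>shead (W ! i) e \<in> sCen (W ! i)\<close> slice_disj[OF sl] by auto
  next
    case left thus ?thesis using \<open>shead (W ! i) e \<in> sCen (W ! i)\<close> slice_disj[OF sl] by auto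
  qed
next
  case (right i e e' r)
  have sl: "is_slice (W!i)" "is_slice (W!Suc i)" using right by auto
  from right.prems(1) show ?case
  proof (cases rule: reach.cases)
    case here thus ?thesis using \<open>shead (W ! i) e \<in> sOut (W ! i)\<close> slice_disj[OF sl(1)] by auto
  next
    case (right e2)
    have "stail (W!Suc i) e2 = stail (W!Suc i) e'"
      using slice_inj_in[OF sl(2)] right \<open>stail (W!Suc i) e' \<in> sIn (W!Suc i)\<close>
        \<open>snum (W ! Suc i) (stail (W ! Suc i) e') = snum (W ! i) (shead (W ! i) e)\<close>
      by simp
    then have "e2 = e'" using slice_edge_unique[OF sl(2), of "stail (W!Suc i) e'"]
        right \<open>e' \<in> sEdges (W!Suc i)\<close> \<open>stail (W!Suc i) e' \<in> sIn (W!Suc i)\<close> by blast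
    then show ?thesis using right.IH right.prems \<open>reach W (Suc i, e2) r'\<close> by simp
  next
    case left thus ?thesis using \<open>shead (W ! i) e \<in> sOut (W ! i)\<close> slice_disj[OF sl(1)] by auto
  qed
next
  case (left i e e' r)
  have sl: "is_slice (W!i)" "is_slice (W!(i-1))" using left by auto
  from left.prems(1) show ?case
  proof (cases rule: reach.cases)
    case here thus ?thesis using \<open>shead (W ! i) e \<in> sIn (W ! i)\<close> slice_disj[OF sl(1)] by auto
  next
    case right thus ?thesis using \<open>shead (W ! i) e \<in> sIn (W ! i)\<close> slice_disj[OF sl(1)] by auto
  next
    case (left e2)
    have "stail (W!(i-1)) e2 = stail (W!(i-1)) e'"
      using slice_inj_out[OF sl(2)] left \<open>stail (W!(i-1)) e' \<in> sOut (W!(i-1))\<close>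
        \<open>snum (W!(i-1)) (stail (W!(i-1)) e') = snum (W ! i) (shead (W ! i) e)\<close>
      by simp
    then have "e2 = e'" using slice_edge_unique[OF sl(2), of "stail (W!(i-1)) e'"]
        left \<open>e' \<in> sEdges (W!(i-1))\<close> \<open>stail (W!(i-1)) e' \<in> sOut (W!(i-1))\<close> by blast
    then show ?thesis using left.IH left.prems \<open>reach W (i-1, e2) r'\<close> by simp
  qed
qed



lemma ud_slice: "is_unit_decomp W \<Longrightarrow> i < length W \<Longrightarrow> is_slice (W!i)"
  unfolding is_unit_decomp_def unit_slice_def by auto

lemma ud_ne: "is_unit_decomp W \<Longrightarrow> W \<noteq> []"
  unfolding is_unit_decomp_def by (elim conjE)
lemma ud_init: "is_unit_decomp W \<Longrightarrow> initial_slice (hd W)"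
  unfolding is_unit_decomp_def by (elim conjE)
lemma ud_final: "is_unit_decomp W \<Longrightarrow> final_slice (last W)"
  unfolding is_unit_decomp_def by (elim conjE)
lemma ud_glue: "is_unit_decomp W \<Longrightarrow> Suc i < length W \<Longrightarrow> gluable (W!i) (W!Suc i)"
  unfolding is_unit_decomp_def by (elim conjE) blast

lemma ud_slices: "is_unit_decomp W \<Longrightarrow> \<forall>S\<in>set W. is_slice S"
  unfolding is_unit_decomp_def unit_slice_def by auto

lemma slice_ends: "is_slice S \<Longrightarrow> e \<in> sEdges S \<Longrightarrow> stail S e \<in> sVerts S \<and> shead S e \<in> sVerts S"
  unfolding is_slice_def by blast
lemma slice_head_verts: "is_slice S \<Longrightarrow> e \<in> sEdges S \<Longrightarrow> shead S e \<in> sIn S \<or> shead S e \<in> sCen S \<or> shead S e \<in> sOut S"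
  using slice_ends[of S e] unfolding sVerts_def by simp
lemma slice_tail_verts: "is_slice S \<Longrightarrow> e \<in> sEdges S \<Longrightarrow> stail S e \<in> sIn S \<or> stail S e \<in> sCen S \<or> stail S e \<in> sOut S"
  using slice_ends[of S e] unfolding sVerts_def by simp
lemma slice_fin: "is_slice S \<Longrightarrow> finite (sVerts S) \<and> finite (sEdges S)"
  unfolding is_slice_def by blast
lemma slice_noinout0: "is_slice S \<Longrightarrow> \<forall>e\<in>sEdges S. \<not> (stail S e \<in> sIn S \<and> shead S e \<in> sIn S) \<and>
                    \<not> (stail S e \<in> sOut S \<and> shead S e \<in> sOut S)"
  unfolding is_slice_def by (elim conjE) assumption
lemma slice_no_inin: "is_slice S \<Longrightarrow> e \<in> sEdges S \<Longrightarrow> stail S e \<in> sIn S \<Longrightarrow> shead S e \<notin> sIn S"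
  using slice_noinout0[of S] by auto
lemma slice_no_outout: "is_slice S \<Longrightarrow> e \<in> sEdges S \<Longrightarrow> stail S e \<in> sOut S \<Longrightarrow> shead S e \<notin> sOut S"
  using slice_noinout0[of S] by auto

lemma gluable_orient0: "gluable S T \<Longrightarrow> (\<forall>x\<in>sOut S. \<forall>y\<in>sIn T. snum S x = snum T y \<longrightarrow>
        ((\<exists>e\<in>sEdges S. shead S e = x) \<longleftrightarrow> (\<exists>e\<in>sEdges T. stail T e = y)))"
  unfolding gluable_def by (elim conjE) assumption
lemma gluable_orient: "gluable S T \<Longrightarrow> x \<in> sOut S \<Longrightarrow> y \<in> sIn T \<Longrightarrow> snum S x = snum T y \<Longrightarrow>
   ((\<exists>e\<in>sEdges S. shead S e = x) \<longleftrightarrow> (\<exists>e\<in>sEdges T. stail T e = y))"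
  using gluable_orient0[of S T] by simp
lemma gluable_nums: "gluable S T \<Longrightarrow> snum S ` sOut S = snum T ` sIn T"
  unfolding gluable_def by (elim conjE) assumption

lemma reach_ex_right:
  assumes ud: "is_unit_decomp W"
  shows "i < length W \<Longrightarrow> e \<in> sEdges (W!i) \<Longrightarrow> shead (W!i) e \<notin> sIn (W!i) \<Longrightarrow> \<exists>r. reach W (i,e) r"
proof (induction "length W - i" arbitrary: i e rule: less_induct)
  case less
  have sl: "is_slice (W!i)" using ud_slice[OF ud less.prems(1)] .
  consider "shead (W!i) e \<in> sCen (W!i)" | "shead (W!i) e \<in> sOut (W!i)"
    using slice_head_verts[OF sl less.prems(2)] less.prems(3) by blast
  then show ?case
  proof cases
    case 1 thus ?thesis using reach.here[OF less.prems(1,2) 1] by blast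
  next
    case 2
    have Suci: "Suc i < length W"
    proof (rule ccontr)
      assume "\<not> Suc i < length W"
      hence "i = length W - 1" using less.prems(1) by simp
      hence "W!i = last W" using ud_ne[OF ud] by (simp add: last_conv_nth)
      thus False using 2 ud_final[OF ud] unfolding final_slice_def by simp
    qed
    have gl: "gluable (W!i) (W!Suc i)" using ud_glue[OF ud Suci] .
    have "snum (W!i) (shead (W!i) e) \<in> snum (W!Suc i) ` sIn (W!Suc i)"
      using gluable_nums[OF gl] 2 by blast
    then obtain y where y: "y \<in> sIn (W!Suc i)" "snum (W!Suc i) y = snum (W!i) (shead (W!i) e)" by force
    have "\<exists>e'\<in>sEdges (W!Suc i). stail (W!Suc i) e' = y"
      using gluable_orient[OF gl 2 y(1)] y(2) less.prems(2) by auto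
    then obtain e' where e': "e' \<in> sEdges (W!Suc i)" "stail (W!Suc i) e' = y" by blast
    have sl2: "is_slice (W!Suc i)" using ud_slice[OF ud Suci] .
    have "\<exists>r. reach W (Suc i, e') r"
      using less.hyps[of "Suc i" e'] less.prems(1) Suci e' slice_no_inin[OF sl2 e'(1)] y(1) by auto
    then obtain r where "reach W (Suc i, e') r" by blast
    then have "reach W (i,e) r"
      using reach.right[of i W e e' r] less.prems 2 Suci e' y by auto
    thus ?thesis by blast
  qed
qed

lemma reach_ex_left:
  assumes ud: "is_unit_decomp W"
  shows "i < length W \<Longrightarrow> e \<in> sEdges (W!i) \<Longrightarrow> shead (W!i) e \<notin> sOut (W!i) \<Longrightarrow> \<exists>r. reach W (i,e) r"
proof (induction i arbitrary: e rule: less_induct)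
  case (less i)
  have sl: "is_slice (W!i)" using ud_slice[OF ud less.prems(1)] .
  consider "shead (W!i) e \<in> sCen (W!i)" | "shead (W!i) e \<in> sIn (W!i)"
    using slice_head_verts[OF sl less.prems(2)] less.prems(3) by blast
  then show ?case
  proof cases
    case 1 thus ?thesis using reach.here[OF less.prems(1,2) 1] by blast
  next
    case 2
    have ipos: "0 < i"
    proof (rule ccontr)
      assume "\<not> 0 < i"
      hence "W!i = hd W" using ud_ne[OF ud] by (simp add: hd_conv_nth)
      thus False using 2 ud_init[OF ud] unfolding initial_slice_def by simp
    qed
    have gl: "gluable (W!(i-1)) (W!Suc (i-1))" using ud_glue[OF ud, of "i-1"] ipos less.prems(1) by simp
    hence gl: "gluable (W!(i-1)) (W!i)" using ipos by simp
    have "snum (W!i) (shead (W!i) e) \<in> snum (W!(i-1)) ` sOut (W!(i-1))"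
      using gluable_nums[OF gl] 2 by blast
    then obtain x where x: "x \<in> sOut (W!(i-1))" "snum (W!(i-1)) x = snum (W!i) (shead (W!i) e)" by force
    have sl2: "is_slice (W!(i-1))" using ud_slice[OF ud] less.prems(1) by simp
    have "\<not> (\<exists>e2\<in>sEdges (W!i). stail (W!i) e2 = shead (W!i) e)"
    proof
      assume "\<exists>e2\<in>sEdges (W!i). stail (W!i) e2 = shead (W!i) e"
      then obtain e2 where e2: "e2 \<in> sEdges (W!i)" "stail (W!i) e2 = shead (W!i) e" by blast
      have "e2 = e" using slice_edge_unique[OF sl, of "shead (W!i) e" e2 e] e2 2 less.prems(2) by blast
      thus False using e2 2 slice_no_inin[OF sl e2(1)] by simp
    qed
    hence "\<not> (\<exists>e2\<in>sEdges (W!(i-1)). shead (W!(i-1)) e2 = x)"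
      using gluable_orient[OF gl x(1) 2 x(2)] by blast
    moreover obtain e' where e': "e' \<in> sEdges (W!(i-1))" "stail (W!(i-1)) e' = x \<or> shead (W!(i-1)) e' = x"
      using slice_edge_ex[OF sl2, of x] x(1) by blast
    ultimately have e't: "stail (W!(i-1)) e' = x" by blast
    have "\<exists>r. reach W (i-1, e') r"
      using less.IH[of "i-1" e'] ipos less.prems(1) e' e't slice_no_outout[OF sl2 e'(1)] x(1) by auto
    then obtain r where "reach W (i-1, e') r" by blast
    then have "reach W (i,e) r"
      using reach.left[of i W e e' r] less.prems 2 ipos e' e't x by auto
    thus ?thesis by blast
  qed
qed

lemma reach_ex:
  assumes ud: "is_unit_decomp W" "i < length W" "e \<in> sEdges (W!i)"
  shows "\<exists>r. reach W (i,e) r"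
proof (cases "shead (W!i) e \<in> sIn (W!i)")
  case True
  hence "shead (W!i) e \<notin> sOut (W!i)" using slice_disj[OF ud_slice[OF assms(1,2)]] by blast
  thus ?thesis using reach_ex_left[OF assms(1,2,3)] by blast
next
  case False thus ?thesis using reach_ex_right[OF assms(1,2,3)] by blast
qed

lemma reach_the:
  assumes "is_unit_decomp W" "i < length W" "e \<in> sEdges (W!i)"
  obtains r where "reach W (i,e) r" "(THE r. reach W (i,e) r) = r"
proof -
  obtain r where r: "reach W (i,e) r" using reach_ex[OF assms] by blast
  have "(THE r. reach W (i,e) r) = r"
    using r reach_unique[OF _ ud_slices[OF assms(1)]] by blast
  thus ?thesis using r that by blast
qed

lemma compose_digraph:
  assumes "is_unit_decomp W"
  shows "is_digraph (compose W)"
proof -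
  have f1: "finite {(i,v). i < length W \<and> v \<in> sCen (W!i)}"
  proof -
    have "{(i,v). i < length W \<and> v \<in> sCen (W!i)} = Product_Type.Sigma {..<length W} (\<lambda>i. sCen (W!i))" by auto
    moreover have "\<forall>i<length W. finite (sCen (W!i))"
      using ud_slice[OF assms] slice_fin unfolding sVerts_def by blast
    ultimately show ?thesis by auto
  qed
  have f2: "finite {(i,e). i < length W \<and> e \<in> sEdges (W!i) \<and> stail (W!i) e \<in> sCen (W!i)}"
  proof -
    have "{(i,e). i < length W \<and> e \<in> sEdges (W!i) \<and> stail (W!i) e \<in> sCen (W!i)} \<subseteq> Product_Type.Sigma {..<length W} (\<lambda>i. sEdges (W!i))" by auto
    moreover have "\<forall>i<length W. finite (sEdges (W!i))"
      using ud_slice[OF assms] slice_fin by blast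
    ultimately show ?thesis by (meson finite_SigmaI finite_lessThan finite_subset lessThan_iff)
  qed
  have "\<forall>p\<in>dE (compose W). dtail (compose W) p \<in> dV (compose W) \<and> dhead (compose W) p \<in> dV (compose W)"
  proof
    fix p assume p: "p \<in> dE (compose W)"
    obtain i e where ie: "p = (i,e)" "i < length W" "e \<in> sEdges (W!i)" "stail (W!i) e \<in> sCen (W!i)"
      using p unfolding compose_def by auto
    obtain r where r: "reach W (i,e) r" "(THE r. reach W (i,e) r) = r" using reach_the[OF assms ie(2,3)] by blast
    have "fst r < length W \<and> snd r \<in> sCen (W ! fst r)" using reach_cen[OF r(1)] .
    thus "dtail (compose W) p \<in> dV (compose W) \<and> dhead (compose W) p \<in> dV (compose W)"
      using ie r unfolding compose_def by (cases r) auto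
  qed
  thus ?thesis using f1 f2 unfolding is_digraph_def compose_def by simp
qed



definition struct_iso :: "('v \<Rightarrow> 'w) \<Rightarrow> ('e \<Rightarrow> 'f) \<Rightarrow> ('v,'e) slice \<Rightarrow> ('w,'f) slice \<Rightarrow> bool" where
  "struct_iso f g S T \<longleftrightarrow> bij_betw f (sVerts S) (sVerts T) \<and> bij_betw g (sEdges S) (sEdges T) \<and>
     f ` sIn S = sIn T \<and> f ` sCen S = sCen T \<and> f ` sOut S = sOut T \<and>
     (\<forall>e\<in>sEdges S. stail T (g e) = f (stail S e) \<and> shead T (g e) = f (shead S e))"

definition match_pres :: "(nat \<Rightarrow> 'v \<Rightarrow> 'w) \<Rightarrow> ('v,'e) slice list \<Rightarrow> ('w,'f) slice list \<Rightarrow> bool" where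
  "match_pres F W W0 \<longleftrightarrow> (\<forall>i x y. Suc i < length W \<longrightarrow> x \<in> sOut (W!i) \<longrightarrow> y \<in> sIn (W!Suc i) \<longrightarrow>
      snum (W!i) x = snum (W!Suc i) y \<longrightarrow> snum (W0!i) (F i x) = snum (W0!Suc i) (F (Suc i) y))"

lemma si_edge: "struct_iso f g S T \<Longrightarrow> e \<in> sEdges S \<Longrightarrow> g e \<in> sEdges T"
  unfolding struct_iso_def by (meson bij_betw_apply)
lemma si_tail: "struct_iso f g S T \<Longrightarrow> e \<in> sEdges S \<Longrightarrow> stail T (g e) = f (stail S e)"
  unfolding struct_iso_def by blast
lemma si_head: "struct_iso f g S T \<Longrightarrow> e \<in> sEdges S \<Longrightarrow> shead T (g e) = f (shead S e)"
  unfolding struct_iso_def by blast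
lemma si_in: "struct_iso f g S T \<Longrightarrow> v \<in> sIn S \<Longrightarrow> f v \<in> sIn T"
  unfolding struct_iso_def by blast
lemma si_cen: "struct_iso f g S T \<Longrightarrow> v \<in> sCen S \<Longrightarrow> f v \<in> sCen T"
  unfolding struct_iso_def by blast
lemma si_out: "struct_iso f g S T \<Longrightarrow> v \<in> sOut S \<Longrightarrow> f v \<in> sOut T"
  unfolding struct_iso_def by blast

lemma reach_transfer:
  assumes len: "length W0 = length W"
    and si: "\<forall>i<length W. struct_iso (F i) (G i) (W!i) (W0!i)"
    and mp: "match_pres F W W0"
  shows "reach W p r \<Longrightarrow> reach W0 (fst p, G (fst p) (snd p)) (fst r, F (fst r) (snd r))"
proof (induction rule: reach.induct)
  case (here i e)
  have s: "struct_iso (F i) (G i) (W!i) (W0!i)" using si here(1) by blast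
  have "G i e \<in> sEdges (W0!i)" using si_edge[OF s here(2)] .
  moreover have "shead (W0!i) (G i e) \<in> sCen (W0!i)" using si_head[OF s here(2)] si_cen[OF s here(3)] by simp
  ultimately have "reach W0 (i, G i e) (i, shead (W0!i) (G i e))"
    using reach.here[of i W0 "G i e"] here(1) len by simp
  thus ?case using si_head[OF s here(2)] by simp
next
  case (right i e e' r)
  have s: "struct_iso (F i) (G i) (W!i) (W0!i)" using si right(1) by blast
  have s2: "struct_iso (F (Suc i)) (G (Suc i)) (W!Suc i) (W0!Suc i)" using si right(4) by blast
  have m: "snum (W0!i) (F i (shead (W!i) e)) = snum (W0!Suc i) (F (Suc i) (stail (W!Suc i) e'))"
    using mp right(1-7) unfolding match_pres_def by simp
  have "reach W0 (i, G i e) (fst r, F (fst r) (snd r))"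
    apply (rule reach.right[of i W0 "G i e" "G (Suc i) e'"])
    using right len si_edge[OF s] si_head[OF s] si_out[OF s] si_edge[OF s2] si_tail[OF s2] si_in[OF s2] m
    by simp_all
  thus ?case by simp
next
  case (left i e e' r)
  have s: "struct_iso (F i) (G i) (W!i) (W0!i)" using si left(1) by blast
  have s2: "struct_iso (F (i-1)) (G (i-1)) (W!(i-1)) (W0!(i-1))" using si left(1) by simp
  have m: "snum (W0!(i-1)) (F (i-1) (stail (W!(i-1)) e')) = snum (W0!Suc (i-1)) (F (Suc (i-1)) (shead (W!i) e))"
    using mp left(1-7) unfolding match_pres_def by simp
  hence m: "snum (W0!(i-1)) (F (i-1) (stail (W!(i-1)) e')) = snum (W0!i) (F i (shead (W!i) e))"
    using left(4) by simp
  have "reach W0 (i, G i e) (fst r, F (fst r) (snd r))"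
    apply (rule reach.left[of i W0 "G i e" "G (i-1) e'"])
    using left len si_edge[OF s] si_head[OF s] si_in[OF s] si_edge[OF s2] si_tail[OF s2] si_out[OF s2] m
    by simp_all
  thus ?case by simp
qed

lemma bij_betw_tag:
  assumes "\<forall>i<n. bij_betw (F i) (A i) (B i)"
  shows "bij_betw (\<lambda>(i,v). (i, F i v)) {(i,v). i<n \<and> v \<in> A i} {(i,v). i<n \<and> v \<in> B i}"
  unfolding bij_betw_def
proof
  show "inj_on (\<lambda>(i,v). (i, F i v)) {(i,v). i<n \<and> v \<in> A i}"
  proof (rule inj_onI)
    fix x y assume "x \<in> {(i,v). i<n \<and> v \<in> A i}" "y \<in> {(i,v). i<n \<and> v \<in> A i}"
      "(case x of (i,v) \<Rightarrow> (i, F i v)) = (case y of (i,v) \<Rightarrow> (i, F i v))"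
    thus "x = y" using assms unfolding bij_betw_def inj_on_def by auto
  qed
  show "(\<lambda>(i,v). (i, F i v)) ` {(i,v). i<n \<and> v \<in> A i} = {(i,v). i<n \<and> v \<in> B i}"
  proof
    show "(\<lambda>(i,v). (i, F i v)) ` {(i,v). i<n \<and> v \<in> A i} \<subseteq> {(i,v). i<n \<and> v \<in> B i}"
      using assms bij_betw_apply by fastforce
    show "{(i,v). i<n \<and> v \<in> B i} \<subseteq> (\<lambda>(i,v). (i, F i v)) ` {(i,v). i<n \<and> v \<in> A i}"
    proof
      fix x assume "x \<in> {(i,v). i<n \<and> v \<in> B i}"
      then obtain i b where x: "x = (i,b)" "i < n" "b \<in> B i" by blast
      then obtain a where "a \<in> A i" "b = F i a" using assms unfolding bij_betw_def by blast
      thus "x \<in> (\<lambda>(i,v). (i, F i v)) ` {(i,v). i<n \<and> v \<in> A i}" using x by force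
    qed
  qed
qed

lemma si_cen_bij: "struct_iso f g S T \<Longrightarrow> bij_betw f (sCen S) (sCen T)"
proof -
  assume s: "struct_iso f g S T"
  have "sCen S \<subseteq> sVerts S" unfolding sVerts_def by blast
  moreover have "bij_betw f (sVerts S) (sVerts T)" "f ` sCen S = sCen T" using s unfolding struct_iso_def by blast+
  ultimately show ?thesis using bij_betw_subset by blast
qed

lemma si_cedge_bij:
  assumes s: "struct_iso f g S T" and sl: "is_slice S"
  shows "bij_betw g {e\<in>sEdges S. stail S e \<in> sCen S} {e\<in>sEdges T. stail T e \<in> sCen T}"
proof (rule bij_betw_subset)
  show "bij_betw g (sEdges S) (sEdges T)" using s unfolding struct_iso_def by blast
  show "{e\<in>sEdges S. stail S e \<in> sCen S} \<subseteq> sEdges S" by blast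
  show "g ` {e\<in>sEdges S. stail S e \<in> sCen S} = {e\<in>sEdges T. stail T e \<in> sCen T}"
  proof
    show "g ` {e\<in>sEdges S. stail S e \<in> sCen S} \<subseteq> {e\<in>sEdges T. stail T e \<in> sCen T}"
    proof
      fix e' assume "e' \<in> g ` {e\<in>sEdges S. stail S e \<in> sCen S}"
      then obtain e where e: "e \<in> sEdges S" "stail S e \<in> sCen S" "e' = g e" by blast
      show "e' \<in> {e\<in>sEdges T. stail T e \<in> sCen T}"
        using si_edge[OF s e(1)] si_tail[OF s e(1)] si_cen[OF s e(2)] e(3) by simp
    qed
    show "{e\<in>sEdges T. stail T e \<in> sCen T} \<subseteq> g ` {e\<in>sEdges S. stail S e \<in> sCen S}"
    proof
      fix e' assume e': "e' \<in> {e\<in>sEdges T. stail T e \<in> sCen T}"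
      have "sEdges T = g ` sEdges S" using s unfolding struct_iso_def bij_betw_def by (elim conjE) simp
      then obtain e where e: "e \<in> sEdges S" "e' = g e" using e' by blast
      have "f (stail S e) \<in> sCen T" using e e' si_tail[OF s e(1)] by simp
      then obtain c where c: "c \<in> sCen S" "f (stail S e) = f c" using s unfolding struct_iso_def by blast
      have "stail S e \<in> sVerts S" using slice_ends[OF sl e(1)] by blast
      moreover have "c \<in> sVerts S" using c(1) unfolding sVerts_def by blast
      moreover have "inj_on f (sVerts S)" using s unfolding struct_iso_def bij_betw_def by blast
      ultimately have "stail S e = c" using c(2) by (meson inj_onD)
      thus "e' \<in> g ` {e\<in>sEdges S. stail S e \<in> sCen S}" using e c by blast
    qed
  qed
qed

lemma lc_filter: "concat (map (\<lambda>i. if P i then [f i] else []) xs) = map f (filter P xs)"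
  by (induction xs) auto

lemma centers_alt: "centers W = map (\<lambda>i. (i, the_elem (sCen (W!i)))) (filter (\<lambda>i. sCen (W!i) \<noteq> {}) [0..<length W])"
  unfolding centers_def by (rule lc_filter)

lemma ud_cen: "is_unit_decomp W \<Longrightarrow> i < length W \<Longrightarrow> sCen (W!i) \<noteq> {} \<Longrightarrow> \<exists>c. sCen (W!i) = {c}"
proof -
  assume a: "is_unit_decomp W" "i < length W" "sCen (W!i) \<noteq> {}"
  have u: "unit_slice (W!i)" using a(1,2) unfolding is_unit_decomp_def by auto
  hence "card (sCen (W!i)) \<le> 1" unfolding unit_slice_def by blast
  moreover have "finite (sCen (W!i))" using u slice_fin[of "W!i"] unfolding unit_slice_def sVerts_def by auto
  ultimately show ?thesis using a(3)
    by (metis One_nat_def card_0_eq card_1_singletonE le_Suc_eq le_zero_eq)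
qed

lemma compose_iso:
  assumes ud: "is_unit_decomp W" and ud0: "is_unit_decomp W0"
    and len: "length W0 = length W"
    and si: "\<forall>i<length W. struct_iso (F i) (G i) (W!i) (W0!i)"
    and mp: "match_pres F W W0"
  shows "digraph_iso_via (\<lambda>(i,v). (i, F i v)) (\<lambda>(i,e). (i, G i e)) (compose W) (compose W0)"
    and "map (\<lambda>(i,v). (i, F i v)) (centers W) = centers W0"
proof -
  have "\<forall>i<length W. bij_betw (F i) (sCen (W ! i)) (sCen (W0 ! i))" using si si_cen_bij by blast
  hence bv: "bij_betw (\<lambda>(i,v). (i, F i v)) (dV (compose W)) (dV (compose W0))"
    unfolding compose_def using bij_betw_tag[of "length W" F "\<lambda>i. sCen (W!i)" "\<lambda>i. sCen (W0!i)"]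
      by (simp add: len)
  have be: "bij_betw (\<lambda>(i,e). (i, G i e)) {(i,e). i < length W \<and> e \<in> {e\<in>sEdges (W!i). stail (W!i) e \<in> sCen (W!i)}}
     {(i,e). i < length W \<and> e \<in> {e\<in>sEdges (W0!i). stail (W0!i) e \<in> sCen (W0!i)}}"
  proof (rule bij_betw_tag[of "length W" G], intro allI impI)
    fix i assume i: "i < length W"
    show "bij_betw (G i) {e\<in>sEdges (W!i). stail (W!i) e \<in> sCen (W!i)} {e\<in>sEdges (W0!i). stail (W0!i) e \<in> sCen (W0!i)}"
      using si_cedge_bij[OF _ ud_slice[OF ud i]] si i by blast
  qed
  hence be: "bij_betw (\<lambda>(i,e). (i, G i e)) (dE (compose W)) (dE (compose W0))"
    unfolding compose_def using len by simp
  have ed: "\<forall>p\<in>dE (compose W). dtail (compose W0) ((\<lambda>(i,e). (i, G i e)) p) = (\<lambda>(i,v). (i, F i v)) (dtail (compose W) p) \<and>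
      dhead (compose W0) ((\<lambda>(i,e). (i, G i e)) p) = (\<lambda>(i,v). (i, F i v)) (dhead (compose W) p)"
  proof
    fix p assume p: "p \<in> dE (compose W)"
    obtain i e where ie: "p = (i,e)" "i < length W" "e \<in> sEdges (W!i)" "stail (W!i) e \<in> sCen (W!i)"
      using p unfolding compose_def by auto
    have s: "struct_iso (F i) (G i) (W!i) (W0!i)" using si ie(2) by blast
    obtain r where r: "reach W (i,e) r" "(THE r. reach W (i,e) r) = r" using reach_the[OF ud ie(2,3)] by blast
    have r0: "reach W0 (i, G i e) (fst r, F (fst r) (snd r))" using reach_transfer[OF len si mp r(1)] by simp
    have "(THE r. reach W0 (i, G i e) r) = (fst r, F (fst r) (snd r))"
      using r0 reach_unique[OF _ ud_slices[OF ud0]] by blast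
    thus "dtail (compose W0) ((\<lambda>(i,e). (i, G i e)) p) = (\<lambda>(i,v). (i, F i v)) (dtail (compose W) p) \<and>
      dhead (compose W0) ((\<lambda>(i,e). (i, G i e)) p) = (\<lambda>(i,v). (i, F i v)) (dhead (compose W) p)"
      using ie r si_tail[OF s ie(3)] unfolding compose_def by (cases r) simp
  qed
  show "digraph_iso_via (\<lambda>(i,v). (i, F i v)) (\<lambda>(i,e). (i, G i e)) (compose W) (compose W0)"
    unfolding digraph_iso_via_def using bv be ed by blast
  have fl: "filter (\<lambda>i. sCen (W0!i) \<noteq> {}) [0..<length W0] = filter (\<lambda>i. sCen (W!i) \<noteq> {}) [0..<length W]"
    using len si unfolding struct_iso_def by (auto intro!: filter_cong)
  show "map (\<lambda>(i,v). (i, F i v)) (centers W) = centers W0"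
    unfolding centers_alt fl map_map
  proof (rule map_cong)
    fix i assume "i \<in> set (filter (\<lambda>i. sCen (W!i) \<noteq> {}) [0..<length W])"
    hence i: "i < length W" "sCen (W!i) \<noteq> {}" by auto
    obtain c where c: "sCen (W!i) = {c}" using ud_cen[OF ud i] by blast
    have "F i ` sCen (W!i) = sCen (W0!i)" using si i unfolding struct_iso_def by blast
    hence "sCen (W0!i) = {F i c}" using c by simp
    thus "((\<lambda>(i,v). (i, F i v)) \<circ> (\<lambda>i. (i, the_elem (sCen (W!i))))) i = (\<lambda>i. (i, the_elem (sCen (W0!i)))) i" using c by simp
  qed simp
qed



lemma iso_inv:
  assumes dg: "is_digraph G" and iso: "digraph_iso_via f g G H"
  shows "digraph_iso_via (inv_into (dV G) f) (inv_into (dE G) g) H G"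
proof -
  have bv: "bij_betw f (dV G) (dV H)" and be: "bij_betw g (dE G) (dE H)"
    and te: "\<forall>e\<in>dE G. dtail H (g e) = f (dtail G e) \<and> dhead H (g e) = f (dhead G e)"
    using iso unfolding digraph_iso_via_def by blast+
  have ends: "\<forall>e\<in>dE G. dtail G e \<in> dV G \<and> dhead G e \<in> dV G" using dg unfolding is_digraph_def by blast
  have "\<forall>e'\<in>dE H. dtail G (inv_into (dE G) g e') = inv_into (dV G) f (dtail H e') \<and>
                   dhead G (inv_into (dE G) g e') = inv_into (dV G) f (dhead H e')"
  proof
    fix e' assume e': "e' \<in> dE H"
    have eH: "e' \<in> g ` dE G" using be e' unfolding bij_betw_def by blast
    define e where "e = inv_into (dE G) g e'"
    have e: "e \<in> dE G" "g e = e'" unfolding e_def using eH by (auto simp: inv_into_into f_inv_into_f)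
    have inj: "inj_on f (dV G)" using bv unfolding bij_betw_def by blast
    have "inv_into (dV G) f (dtail H e') = dtail G e"
      using te e ends inv_into_f_f[OF inj] by metis
    moreover have "inv_into (dV G) f (dhead H e') = dhead G e"
      using te e ends inv_into_f_f[OF inj] by metis
    ultimately show "dtail G (inv_into (dE G) g e') = inv_into (dV G) f (dtail H e') \<and>
                   dhead G (inv_into (dE G) g e') = inv_into (dV G) f (dhead H e')"
      unfolding e_def by simp
  qed
  thus ?thesis unfolding digraph_iso_via_def using bij_betw_inv_into[OF bv] bij_betw_inv_into[OF be] by blast
qed

lemma iso_comp:
  assumes "digraph_iso_via f g G H" "digraph_iso_via f' g' H K"
  shows "digraph_iso_via (f' \<circ> f) (g' \<circ> g) G K"
proof -
  have "\<forall>e\<in>dE G. g e \<in> dE H" using assms(1) unfolding digraph_iso_via_def by (meson bij_betw_apply)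
  thus ?thesis using assms unfolding digraph_iso_via_def by (auto intro: bij_betw_trans)
qed

lemma iso_digraph:
  assumes dg: "is_digraph G" and iso: "digraph_iso_via f g G H" shows "is_digraph H"
proof -
  have bv: "bij_betw f (dV G) (dV H)" and be: "bij_betw g (dE G) (dE H)"
    and te: "\<forall>e\<in>dE G. dtail H (g e) = f (dtail G e) \<and> dhead H (g e) = f (dhead G e)"
    using iso unfolding digraph_iso_via_def by blast+
  have "finite (dV H)" using bv dg unfolding is_digraph_def bij_betw_def by (metis finite_imageI)
  moreover have "finite (dE H)" using be dg unfolding is_digraph_def bij_betw_def by (metis finite_imageI)
  moreover have "\<forall>e'\<in>dE H. dtail H e' \<in> dV H \<and> dhead H e' \<in> dV H"
  proof
    fix e' assume "e' \<in> dE H"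
    then obtain e where e: "e \<in> dE G" "e' = g e" using be unfolding bij_betw_def by blast
    thus "dtail H e' \<in> dV H \<and> dhead H e' \<in> dV H" using te dg bv unfolding is_digraph_def
      by (metis bij_betw_apply)
  qed
  ultimately show ?thesis unfolding is_digraph_def by blast
qed

lemma path_transfer:
  assumes dg: "is_digraph G" and iso: "digraph_iso_via f g G H" and p: "is_simple_path G es"
  shows "is_simple_path H (map g es)"
proof -
  have bv: "bij_betw f (dV G) (dV H)" and be: "bij_betw g (dE G) (dE H)"
    and te: "\<forall>e\<in>dE G. dtail H (g e) = f (dtail G e) \<and> dhead H (g e) = f (dhead G e)"
    using iso unfolding digraph_iso_via_def by blast+
  have ends: "\<forall>e\<in>dE G. dtail G e \<in> dV G \<and> dhead G e \<in> dV G" using dg unfolding is_digraph_def by blast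
  have ne: "es \<noteq> []" and sub: "set es \<subseteq> dE G"
    and ch: "\<forall>j. Suc j < length es \<longrightarrow> dhead G (es!j) = dtail G (es!Suc j)"
    and di: "distinct (dtail G (hd es) # map (dhead G) es)"
    using p unfolding is_simple_path_def by blast+
  have "set (map g es) \<subseteq> dE H" using sub be bij_betw_apply by fastforce
  moreover have "\<forall>j. Suc j < length (map g es) \<longrightarrow> dhead H (map g es!j) = dtail H (map g es!Suc j)"
  proof (intro allI impI)
    fix j assume j: "Suc j < length (map g es)"
    have "es!j \<in> dE G" "es!Suc j \<in> dE G" using j sub by auto
    thus "dhead H (map g es!j) = dtail H (map g es!Suc j)" using te ch j by simp
  qed
  moreover have "distinct (dtail H (hd (map g es)) # map (dhead H) (map g es))"
  proof -
    have hdG: "hd es \<in> dE G" using ne sub hd_in_set by blast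
    have mm: "map (dhead H) (map g es) = map f (map (dhead G) es)"
      using te sub by (auto intro!: map_cong)
    have eq: "dtail H (hd (map g es)) # map (dhead H) (map g es) = map f (dtail G (hd es) # map (dhead G) es)"
      using te hdG ne mm by (simp add: hd_map)
    have "set (dtail G (hd es) # map (dhead G) es) \<subseteq> dV G" using ends sub hdG by auto
    hence "inj_on f (set (dtail G (hd es) # map (dhead G) es))"
      using bv unfolding bij_betw_def by (meson inj_on_subset)
    hence "distinct (map f (dtail G (hd es) # map (dhead G) es))" using di distinct_map by blast
    thus ?thesis using eq by metis
  qed
  ultimately show ?thesis unfolding is_simple_path_def using ne by blast
qed

lemma ztop_push:
  assumes dg: "is_digraph G" and iso: "digraph_iso_via f g G H" and zt: "z_topological z G ord"
  shows "z_topological z H (map f ord)"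
proof -
  have bv: "bij_betw f (dV G) (dV H)" and be: "bij_betw g (dE G) (dE H)"
    and te: "\<forall>e\<in>dE G. dtail H (g e) = f (dtail G e) \<and> dhead H (g e) = f (dhead G e)"
    using iso unfolding digraph_iso_via_def by blast+
  have ends: "\<forall>e\<in>dE G. dtail G e \<in> dV G \<and> dhead G e \<in> dV G" using dg unfolding is_digraph_def by blast
  have dist: "distinct ord" and so: "set ord = dV G"
    and zz: "\<forall>es. is_simple_path G es \<longrightarrow> (\<forall>i. length (filter (\<lambda>e. (dtail G e \<in> set (take i ord)) \<noteq> (dhead G e \<in> set (take i ord))) es) \<le> z)"
    using zt unfolding z_topological_def by blast+
  have inj: "inj_on f (dV G)" using bv unfolding bij_betw_def by blast
  have "distinct (map f ord)" using dist inj so by (simp add: distinct_map)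
  moreover have "set (map f ord) = dV H" using so bv unfolding bij_betw_def by simp
  moreover have "\<forall>es. is_simple_path H es \<longrightarrow> (\<forall>i. length (filter (\<lambda>e. (dtail H e \<in> set (take i (map f ord))) \<noteq> (dhead H e \<in> set (take i (map f ord)))) es) \<le> z)"
  proof (intro allI impI)
    fix es i assume p: "is_simple_path H es"
    define es' where "es' = map (inv_into (dE G) g) es"
    have dgH: "is_digraph H" using iso_digraph[OF dg iso] .
    have p': "is_simple_path G es'" unfolding es'_def using path_transfer[OF dgH iso_inv[OF dg iso] p] .
    have sub: "set es \<subseteq> dE H" using p unfolding is_simple_path_def by blast
    have eses: "es = map g es'" unfolding es'_def map_map
    proof (rule map_idI[symmetric])
      fix x assume "x \<in> set es"
      hence "x \<in> g ` dE G" using sub be unfolding bij_betw_def by blast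
      thus "(g \<circ> inv_into (dE G) g) x = x" by (simp add: f_inv_into_f)
    qed
    have sub': "set es' \<subseteq> dE G" using p' unfolding is_simple_path_def by blast
    have cross: "\<forall>e\<in>set es'. ((dtail H (g e) \<in> set (take i (map f ord))) \<noteq> (dhead H (g e) \<in> set (take i (map f ord))))
        = ((dtail G e \<in> set (take i ord)) \<noteq> (dhead G e \<in> set (take i ord)))"
    proof
      fix e assume e: "e \<in> set es'"
      hence eG: "e \<in> dE G" using sub' by blast
      have tk: "set (take i ord) \<subseteq> dV G" using so by (metis set_take_subset)
      have "\<And>v. v \<in> dV G \<Longrightarrow> (f v \<in> set (take i (map f ord))) = (v \<in> set (take i ord))"
      proof -
        fix v assume v: "v \<in> dV G"
        have "set (take i (map f ord)) = f ` set (take i ord)" by (simp add: take_map)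
        thus "(f v \<in> set (take i (map f ord))) = (v \<in> set (take i ord))"
          using inj v tk by (simp add: inj_on_image_mem_iff)
      qed
      thus "((dtail H (g e) \<in> set (take i (map f ord))) \<noteq> (dhead H (g e) \<in> set (take i (map f ord))))
        = ((dtail G e \<in> set (take i ord)) \<noteq> (dhead G e \<in> set (take i ord)))"
        using te eG ends by simp
    qed
    have "length (filter (\<lambda>e. (dtail H e \<in> set (take i (map f ord))) \<noteq> (dhead H e \<in> set (take i (map f ord)))) es)
        = length (filter (\<lambda>e. (dtail G e \<in> set (take i ord)) \<noteq> (dhead G e \<in> set (take i ord))) es')"
      unfolding eses filter_map length_map o_def
      apply (rule arg_cong[where f=length])
      apply (rule filter_cong[OF refl])
      using cross by blast
    also have "\<dots> \<le> z" using zz p' by blast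
    finally show "length (filter (\<lambda>e. (dtail H e \<in> set (take i (map f ord))) \<noteq> (dhead H e \<in> set (take i (map f ord)))) es) \<le> z" .
  qed
  ultimately show ?thesis unfolding z_topological_def by blast
qed



lemma sub_slice_parts:
  assumes "sub_slice S' S"
  shows "sEdges S' \<subseteq> sEdges S" "stail S' = stail S" "shead S' = shead S" "snum S' = snum S"
    "sIn S' \<subseteq> sIn S" "sCen S' \<subseteq> sCen S" "sOut S' \<subseteq> sOut S" "is_slice S'"
  using assms unfolding sub_slice_def by blast+

lemma sub_reach:
  assumes sub: "sub_unit_decomp W U"
  shows "reach W p r \<Longrightarrow> reach U p r"
proof (induction rule: reach.induct)
  have len: "length W = length U" using sub unfolding sub_unit_decomp_def by blast
  have ss: "\<And>i. i < length W \<Longrightarrow> sub_slice (W!i) (U!i)" using sub len unfolding sub_unit_decomp_def by auto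
  {
  case (here i e)
  note p = sub_slice_parts[OF ss[OF here(1)]]
  have "e \<in> sEdges (U!i)" using here(2) p(1) by blast
  moreover have "shead (U!i) e \<in> sCen (U!i)" using here(3) p(3,6) by auto
  ultimately show ?case using reach.here[of i U e] here(1) len p(3) by simp
  next
  case (right i e e' r)
  note p = sub_slice_parts[OF ss[OF right(1)]]
  note p2 = sub_slice_parts[OF ss[OF right(4)]]
  have a1: "i < length U" "Suc i < length U" using right(1,4) len by simp_all
  have a2: "e \<in> sEdges (U!i)" "e' \<in> sEdges (U!Suc i)" using right(2,5) p(1) p2(1) by blast+
  have a3: "shead (U!i) e \<in> sOut (U!i)" using right(3) p(3,7) by auto
  have a4: "stail (U!Suc i) e' \<in> sIn (U!Suc i)" using right(6) p2(2,5) by auto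
  have a5: "snum (U!Suc i) (stail (U!Suc i) e') = snum (U!i) (shead (U!i) e)" using right(7) p(3,4) p2(2,4) by simp
  show ?case by (rule reach.right[OF a1(1) a2(1) a3 a1(2) a2(2) a4 a5 right(9)])
  next
  case (left i e e' r)
  note p = sub_slice_parts[OF ss[OF left(1)]]
  have "i - 1 < length W" using left(1) by simp
  note p2 = sub_slice_parts[OF ss[OF this]]
  have a1: "i < length U" using left(1) len by simp_all
  have a2: "e \<in> sEdges (U!i)" "e' \<in> sEdges (U!(i-1))" using left(2,5) p(1) p2(1) by blast+
  have a3: "shead (U!i) e \<in> sIn (U!i)" using left(3) p(3,5) by auto
  have a4: "stail (U!(i-1)) e' \<in> sOut (U!(i-1))" using left(6) p2(2,7) by auto
  have a5: "snum (U!(i-1)) (stail (U!(i-1)) e') = snum (U!i) (shead (U!i) e)" using left(7) p(3,4) p2(2,4) by simp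
  show ?case by (rule reach.left[OF a1(1) a2(1) a3 left(4) a2(2) a4 a5 left(9)])
  }
qed

lemma sub_compose:
  assumes sub: "sub_unit_decomp W U" and udU: "is_unit_decomp U"
  shows "dV (compose W) \<subseteq> dV (compose U)" "dE (compose W) \<subseteq> dE (compose U)"
    "\<forall>p\<in>dE (compose W). dtail (compose W) p = dtail (compose U) p \<and> dhead (compose W) p = dhead (compose U) p"
proof -
  have len: "length W = length U" using sub unfolding sub_unit_decomp_def by blast
  have ss: "\<And>i. i < length W \<Longrightarrow> sub_slice (W!i) (U!i)" using sub len unfolding sub_unit_decomp_def by auto
  have udW: "is_unit_decomp W" using sub unfolding sub_unit_decomp_def by blast
  show "dV (compose W) \<subseteq> dV (compose U)"
    unfolding compose_def using len ss sub_slice_parts(6) by fastforce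
  show "dE (compose W) \<subseteq> dE (compose U)"
    unfolding compose_def using len ss sub_slice_parts(1,2,6) by fastforce
  show "\<forall>p\<in>dE (compose W). dtail (compose W) p = dtail (compose U) p \<and> dhead (compose W) p = dhead (compose U) p"
  proof
    fix p assume p: "p \<in> dE (compose W)"
    obtain i e where ie: "p = (i,e)" "i < length W" "e \<in> sEdges (W!i)" "stail (W!i) e \<in> sCen (W!i)"
      using p unfolding compose_def by auto
    obtain r where r: "reach W (i,e) r" "(THE r. reach W (i,e) r) = r" using reach_the[OF udW ie(2,3)] by blast
    have "reach U (i,e) r" using sub_reach[OF sub r(1)] .
    hence "(THE r. reach U (i,e) r) = r" using reach_unique[OF _ ud_slices[OF udU]] by blast
    thus "dtail (compose W) p = dtail (compose U) p \<and> dhead (compose W) p = dhead (compose U) p"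
      using r ie sub_slice_parts(2)[OF ss[OF ie(2)]] unfolding compose_def by simp
  qed
qed

lemma take_filter_ex: "\<exists>j. set (take i (filter P xs)) = set (take j xs) \<inter> {x. P x}"
proof (induction xs arbitrary: i)
  case Nil thus ?case by simp
next
  case (Cons a xs)
  show ?case
  proof (cases "P a")
    case True
    show ?thesis
    proof (cases i)
      case 0 thus ?thesis by (rule_tac x=0 in exI) simp
    next
      case (Suc k)
      obtain j where "set (take k (filter P xs)) = set (take j xs) \<inter> {x. P x}" using Cons by blast
      thus ?thesis using True Suc by (rule_tac x="Suc j" in exI) auto
    qed
  next
    case False
    obtain j where "set (take i (filter P xs)) = set (take j xs) \<inter> {x. P x}" using Cons by blast
    thus ?thesis using False by (rule_tac x="Suc j" in exI) auto
  qed
qed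

lemma centers_in_dV: "is_unit_decomp W \<Longrightarrow> set (centers W) \<subseteq> dV (compose W)"
proof
  fix x assume ud: "is_unit_decomp W" and x: "x \<in> set (centers W)"
  then obtain i where i: "i < length W" "sCen (W!i) \<noteq> {}" "x = (i, the_elem (sCen (W!i)))"
    unfolding centers_alt by auto
  obtain c where "sCen (W!i) = {c}" using ud_cen[OF ud i(1,2)] by blast
  thus "x \<in> dV (compose W)" using i unfolding compose_def by simp
qed

lemma sub_centers:
  assumes sub: "sub_unit_decomp W U" and udU: "is_unit_decomp U"
  shows "centers W = filter (\<lambda>x. x \<in> dV (compose W)) (centers U)"
proof -
  have len: "length W = length U" using sub unfolding sub_unit_decomp_def by blast
  have ss: "\<And>i. i < length W \<Longrightarrow> sub_slice (W!i) (U!i)" using sub len unfolding sub_unit_decomp_def by auto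
  have fl: "filter (\<lambda>i. sCen (W!i) \<noteq> {}) [0..<length W] =
      filter ((\<lambda>x. x \<in> dV (compose W)) \<circ> (\<lambda>i. (i, the_elem (sCen (U!i))))) (filter (\<lambda>i. sCen (U!i) \<noteq> {}) [0..<length U])"
    unfolding filter_filter len
  proof (rule filter_cong[OF refl])
    fix i assume "i \<in> set [0..<length U]"
    hence i: "i < length U" by simp
    show "(sCen (W!i) \<noteq> {}) = (sCen (U!i) \<noteq> {} \<and> ((\<lambda>x. x \<in> dV (compose W)) \<circ> (\<lambda>i. (i, the_elem (sCen (U!i))))) i)"
    proof (cases "sCen (U!i) = {}")
      case True thus ?thesis using sub_slice_parts(6)[OF ss] i len by auto
    next
      case False
      then obtain c where c: "sCen (U!i) = {c}" using ud_cen[OF udU i] by blast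
      have "sCen (W!i) \<subseteq> {c}" using sub_slice_parts(6)[OF ss] i len c by auto
      thus ?thesis using c i len unfolding compose_def by auto
    qed
  qed
  have "centers W = map (\<lambda>i. (i, the_elem (sCen (W!i)))) (filter (\<lambda>i. sCen (W!i) \<noteq> {}) [0..<length W])"
    by (rule centers_alt)
  also have "\<dots> = map (\<lambda>i. (i, the_elem (sCen (U!i)))) (filter (\<lambda>i. sCen (W!i) \<noteq> {}) [0..<length W])"
  proof (rule map_cong[OF refl])
    fix i assume "i \<in> set (filter (\<lambda>i. sCen (W!i) \<noteq> {}) [0..<length W])"
    hence i: "i < length W" "sCen (W!i) \<noteq> {}" by auto
    then obtain c where c: "sCen (U!i) = {c}" using ud_cen[OF udU] len sub_slice_parts(6)[OF ss[OF i(1)]] by fastforce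
    have "sCen (W!i) = {c}" using sub_slice_parts(6)[OF ss[OF i(1)]] c i(2) by (metis subset_singletonD)
    thus "(i, the_elem (sCen (W!i))) = (i, the_elem (sCen (U!i)))" using c by simp
  qed
  also have "\<dots> = filter (\<lambda>x. x \<in> dV (compose W)) (centers U)"
    unfolding centers_alt[of U] filter_map fl ..
  finally show ?thesis .
qed

lemma sub_path:
  assumes sub: "sub_unit_decomp W U" and udU: "is_unit_decomp U" and p: "is_simple_path (compose W) es"
  shows "is_simple_path (compose U) es"
proof -
  note sc = sub_compose[OF sub udU]
  have ne: "es \<noteq> []" and s: "set es \<subseteq> dE (compose W)"
    and ch: "\<forall>j. Suc j < length es \<longrightarrow> dhead (compose W) (es!j) = dtail (compose W) (es!Suc j)"
    and di: "distinct (dtail (compose W) (hd es) # map (dhead (compose W)) es)"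
    using p unfolding is_simple_path_def by blast+
  have "set es \<subseteq> dE (compose U)" using s sc(2) by blast
  moreover have "\<forall>j. Suc j < length es \<longrightarrow> dhead (compose U) (es!j) = dtail (compose U) (es!Suc j)"
  proof (intro allI impI)
    fix j assume j: "Suc j < length es"
    have "es!j \<in> dE (compose W)" "es!Suc j \<in> dE (compose W)" using j s by auto
    thus "dhead (compose U) (es!j) = dtail (compose U) (es!Suc j)" using ch j sc(3) by metis
  qed
  moreover have "dtail (compose W) (hd es) # map (dhead (compose W)) es = dtail (compose U) (hd es) # map (dhead (compose U)) es"
  proof -
    have "hd es \<in> dE (compose W)" using s ne hd_in_set by blast
    thus ?thesis using sc(3) s by (auto intro!: map_cong)
  qed
  ultimately show ?thesis using ne di unfolding is_simple_path_def by metis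
qed

lemma ztop_restrict:
  assumes sub: "sub_unit_decomp W U" and udU: "is_unit_decomp U"
    and zt: "z_topological z (compose U) (centers U)"
  shows "z_topological z (compose W) (centers W)"
proof -
  note sc = sub_compose[OF sub udU]
  have udW: "is_unit_decomp W" using sub unfolding sub_unit_decomp_def by blast
  have dist: "distinct (centers U)" and so: "set (centers U) = dV (compose U)"
    and zz: "\<forall>es. is_simple_path (compose U) es \<longrightarrow> (\<forall>i. length (filter (\<lambda>e. (dtail (compose U) e \<in> set (take i (centers U))) \<noteq> (dhead (compose U) e \<in> set (take i (centers U)))) es) \<le> z)"
    using zt unfolding z_topological_def by blast+
  let ?P = "\<lambda>x. x \<in> dV (compose W)"
  have cw: "centers W = filter ?P (centers U)" using sub_centers[OF sub udU] .
  have "distinct (centers W)" using dist cw by simp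
  moreover have "set (centers W) = dV (compose W)" using cw so sc(1) by auto
  moreover have "\<forall>es. is_simple_path (compose W) es \<longrightarrow> (\<forall>i. length (filter (\<lambda>e. (dtail (compose W) e \<in> set (take i (centers W))) \<noteq> (dhead (compose W) e \<in> set (take i (centers W)))) es) \<le> z)"
  proof (intro allI impI)
    fix es i assume p: "is_simple_path (compose W) es"
    obtain j where j: "set (take i (centers W)) = set (take j (centers U)) \<inter> {x. ?P x}"
      using take_filter_ex[of i ?P "centers U"] cw by auto
    have s: "set es \<subseteq> dE (compose W)" using p unfolding is_simple_path_def by blast
    have dgW: "is_digraph (compose W)" using compose_digraph[OF udW] .
    have "filter (\<lambda>e. (dtail (compose W) e \<in> set (take i (centers W))) \<noteq> (dhead (compose W) e \<in> set (take i (centers W)))) es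
        = filter (\<lambda>e. (dtail (compose U) e \<in> set (take j (centers U))) \<noteq> (dhead (compose U) e \<in> set (take j (centers U)))) es"
    proof (rule filter_cong[OF refl])
      fix e assume e: "e \<in> set es"
      hence eW: "e \<in> dE (compose W)" using s by blast
      have "dtail (compose W) e \<in> dV (compose W)" "dhead (compose W) e \<in> dV (compose W)"
        using dgW eW unfolding is_digraph_def by blast+
      thus "((dtail (compose W) e \<in> set (take i (centers W))) \<noteq> (dhead (compose W) e \<in> set (take i (centers W))))
         = ((dtail (compose U) e \<in> set (take j (centers U))) \<noteq> (dhead (compose U) e \<in> set (take j (centers U))))"
        using j sc(3) eW by auto
    qed
    moreover have "length (filter (\<lambda>e. (dtail (compose U) e \<in> set (take j (centers U))) \<noteq> (dhead (compose U) e \<in> set (take j (centers U)))) es) \<le> z"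
      using zz sub_path[OF sub udU p] by blast
    ultimately show "length (filter (\<lambda>e. (dtail (compose W) e \<in> set (take i (centers W))) \<noteq> (dhead (compose W) e \<in> set (take i (centers W)))) es) \<le> z"
      by simp
  qed
  ultimately show ?thesis unfolding z_topological_def by blast
qed



lemma renumber_simps[simp]:
  "sIn (renumber S a b) = sIn S" "sCen (renumber S a b) = sCen S" "sOut (renumber S a b) = sOut S"
  "sEdges (renumber S a b) = sEdges S" "stail (renumber S a b) = stail S" "shead (renumber S a b) = shead S"
  "sVerts (renumber S a b) = sVerts S"
  unfolding renumber_def sVerts_def by simp_all

lemma renumber_in: "v \<in> sIn S \<Longrightarrow> snum (renumber S a b) v = a ! (snum S v - 1)"
  unfolding renumber_def by simp
lemma renumber_out: "v \<in> sOut S \<Longrightarrow> v \<notin> sIn S \<Longrightarrow> snum (renumber S a b) v = b ! (snum S v - 1)"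
  unfolding renumber_def by simp

lemma Nq_simps:
  "sgV (Nq q SG) = {(n,ins,outs). n \<in> sgV SG \<and> (ins,outs) \<in> qnumberings q (sgL SG n)}"
  "sgI (Nq q SG) = {a\<in>sgV (Nq q SG). fst a \<in> sgI SG}"
  "sgF (Nq q SG) = {a\<in>sgV (Nq q SG). fst a \<in> sgF SG}"
  "sgL (Nq q SG) = (\<lambda>(n,ins,outs). renumber (sgL SG n) ins outs)"
  "sgE (Nq q SG) = {(a,b). a \<in> sgV (Nq q SG) \<and> b \<in> sgV (Nq q SG) \<and> (fst a, fst b) \<in> sgE SG \<and> gluable (sgL (Nq q SG) a) (sgL (Nq q SG) b)}"
  unfolding Nq_def Let_def by simp_all

lemma slang_ud:
  assumes sg: "is_slice_graph SG" and W: "W \<in> slang SG"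
  shows "is_unit_decomp W"
proof -
  obtain ns where ns: "W = map (sgL SG) ns" "ns \<noteq> []" "hd ns \<in> sgI SG" "last ns \<in> sgF SG"
    "set ns \<subseteq> sgV SG" "\<forall>j. Suc j < length ns \<longrightarrow> (ns!j, ns!Suc j) \<in> sgE SG"
    using W unfolding slang_def by blast
  have lab: "\<forall>n\<in>sgV SG. unit_slice (sgL SG n)" "\<forall>n\<in>sgI SG. initial_slice (sgL SG n)"
    "\<forall>n\<in>sgF SG. final_slice (sgL SG n)" "\<forall>(n,m)\<in>sgE SG. gluable (sgL SG n) (sgL SG m)"
    using sg unfolding is_slice_graph_def by blast+
  have "W \<noteq> []" using ns by simp
  moreover have "\<forall>S\<in>set W. unit_slice S" using ns lab by auto
  moreover have "initial_slice (hd W)" using ns lab by (simp add: hd_map)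
  moreover have "final_slice (last W)" using ns lab by (simp add: last_map)
  moreover have "\<forall>i. Suc i < length W \<longrightarrow> gluable (W!i) (W!Suc i)" using ns lab by auto
  ultimately show ?thesis unfolding is_unit_decomp_def by blast
qed

lemma img_nth_shift: "(\<lambda>k. xs ! (k - 1)) ` {1..length xs} = set xs"
proof -
  have "(\<lambda>k. xs ! (k - 1)) ` {1..length xs} = (\<lambda>k. xs ! k) ` {0..<length xs}"
  proof
    show "(\<lambda>k. xs ! (k - 1)) ` {1..length xs} \<subseteq> (!) xs ` {0..<length xs}" by force
    show "(!) xs ` {0..<length xs} \<subseteq> (\<lambda>k. xs ! (k - 1)) ` {1..length xs}"
    proof
      fix x assume "x \<in> (!) xs ` {0..<length xs}"
      then obtain k where k: "k < length xs" "x = xs!k" by auto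
      thus "x \<in> (\<lambda>k. xs ! (k - 1)) ` {1..length xs}" by (rule_tac x="Suc k" in image_eqI) auto
    qed
  qed
  thus ?thesis by (simp add: set_conv_nth image_def) (auto simp: Bex_def)
qed

lemma norm_num_in: "normalized_slice S \<Longrightarrow> v \<in> sIn S \<Longrightarrow> snum S v \<in> {1..card (sIn S)}"
  unfolding normalized_slice_def by blast
lemma norm_num_out: "normalized_slice S \<Longrightarrow> v \<in> sOut S \<Longrightarrow> snum S v \<in> {1..card (sOut S)}"
  unfolding normalized_slice_def by blast

lemma renum_match:
  assumes nS: "normalized_slice S" and nT: "normalized_slice T" and slS: "is_slice S"
    and qS: "(ins,outs) \<in> qnumberings q S" and qT: "(ins',outs') \<in> qnumberings q T"
    and gl: "gluable (renumber S ins outs) (renumber T ins' outs')"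
    and x: "x \<in> sOut S" and y: "y \<in> sIn T"
    and eq: "snum (renumber S ins outs) x = snum (renumber T ins' outs') y"
  shows "snum S x = snum T y"
proof -
  have dS: "\<And>v. v \<in> sOut S \<Longrightarrow> v \<notin> sIn S" using slice_disj[OF slS] by blast
  have lo: "length outs = card (sOut S)" "sorted_wrt (<) outs" using qS unfolding qnumberings_def by auto
  have li: "length ins' = card (sIn T)" "sorted_wrt (<) ins'" using qT unfolding qnumberings_def by auto
  have "snum (renumber S ins outs) ` sOut S = (\<lambda>v. outs ! (snum S v - 1)) ` sOut S"
    by (rule image_cong[OF refl]) (simp add: renumber_out dS)
  also have "\<dots> = (\<lambda>k. outs ! (k - 1)) ` (snum S ` sOut S)" by (simp add: image_image)
  also have "\<dots> = set outs" using nS lo(1) img_nth_shift[of outs] unfolding normalized_slice_def by simp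
  finally have so: "snum (renumber S ins outs) ` sOut S = set outs" .
  have "snum (renumber T ins' outs') ` sIn T = (\<lambda>v. ins' ! (snum T v - 1)) ` sIn T"
    by (rule image_cong[OF refl]) (simp add: renumber_in)
  also have "\<dots> = (\<lambda>k. ins' ! (k - 1)) ` (snum T ` sIn T)" by (simp add: image_image)
  also have "\<dots> = set ins'" using nT li(1) img_nth_shift[of ins'] unfolding normalized_slice_def by simp
  finally have si: "snum (renumber T ins' outs') ` sIn T = set ins'" .
  have "set outs = set ins'" using gluable_nums[OF gl] so si by simp
  hence oi: "outs = ins'" using strict_sorted_equal[OF lo(2) li(2)] by simp
  have a: "snum S x \<in> {1..length outs}" using norm_num_out[OF nS x] lo(1) by simp
  have b: "snum T y \<in> {1..length outs}" using norm_num_in[OF nT y] li(1) oi by simp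
  have "outs ! (snum S x - 1) = outs ! (snum T y - 1)"
    using eq renumber_out[OF x dS[OF x]] renumber_in[OF y] oi by simp
  moreover have "distinct outs" using lo(2) strict_sorted_iff by blast
  ultimately have "snum S x - 1 = snum T y - 1" using a b nth_eq_iff_index_eq by fastforce
  thus ?thesis using a b by (simp only: atLeastAtMost_iff) arith
qed

lemma slice_isoE:
  assumes "slice_iso S T"
  obtains f g where "bij_betw f (sVerts S) (sVerts T)" "bij_betw g (sEdges S) (sEdges T)"
      "f ` sIn S = sIn T" "f ` sCen S = sCen T" "f ` sOut S = sOut T"
      "\<forall>v\<in>sIn S \<union> sOut S. snum T (f v) = snum S v"
      "\<forall>e\<in>sEdges S. stail T (g e) = f (stail S e) \<and> shead T (g e) = f (shead S e)"
  using assms unfolding slice_iso_def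
  apply (elim exE conjE)
  apply (rule that)
  apply assumption+
  done

lemma R_sub_L:
  assumes sg: "is_slice_graph SG" and norm: "normalized_slice_graph SG"
    and udW: "is_unit_decomp W" and W2: "W2 \<in> slang (Nq q SG)" and wi: "word_iso W W2"
  shows "\<exists>H\<in>graph_lang SG. digraph_iso (compose W) H"
proof -
  obtain ns2 where ns2: "W2 = map (sgL (Nq q SG)) ns2" "ns2 \<noteq> []" "hd ns2 \<in> sgI (Nq q SG)" "last ns2 \<in> sgF (Nq q SG)"
    "set ns2 \<subseteq> sgV (Nq q SG)" "\<forall>j. Suc j < length ns2 \<longrightarrow> (ns2!j, ns2!Suc j) \<in> sgE (Nq q SG)"
    using W2 unfolding slang_def by blast
  define ns where "ns = map fst ns2"
  define W0 where "W0 = map (sgL SG) ns"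
  have W0s: "W0 \<in> slang SG"
  proof -
    have "ns \<noteq> []" using ns2 unfolding ns_def by simp
    moreover have "hd ns \<in> sgI SG" using ns2(2,3) unfolding ns_def Nq_simps by (simp add: hd_map)
    moreover have "last ns \<in> sgF SG" using ns2(2,4) unfolding ns_def Nq_simps by (simp add: last_map)
    moreover have "set ns \<subseteq> sgV SG" using ns2(5) unfolding ns_def Nq_simps(1) by auto
    moreover have "\<forall>j. Suc j < length ns \<longrightarrow> (ns!j, ns!Suc j) \<in> sgE SG"
      using ns2(6) unfolding ns_def Nq_simps(5) by auto
    ultimately show ?thesis unfolding slang_def W0_def by blast
  qed
  have udW0: "is_unit_decomp W0" using slang_ud[OF sg W0s] .
  have len2: "length W2 = length W" using wi unfolding word_iso_def by simp
  have len: "length W0 = length W" using len2 ns2(1) unfolding W0_def ns_def by simp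
  have lenns: "length ns2 = length W" using len2 ns2(1) by simp
  have slot: "\<And>i. i < length W \<Longrightarrow> fst (ns2!i) \<in> sgV SG \<and> (fst (snd (ns2!i)), snd (snd (ns2!i))) \<in> qnumberings q (sgL SG (fst (ns2!i)))
        \<and> W2!i = renumber (W0!i) (fst (snd (ns2!i))) (snd (snd (ns2!i)))"
  proof -
    fix i assume i: "i < length W"
    have "ns2!i \<in> sgV (Nq q SG)" using ns2(5) i lenns by auto
    thus "?thesis i" using i lenns ns2(1) unfolding Nq_simps W0_def ns_def by (auto split: prod.splits)
  qed
  have "\<forall>i. \<exists>fg. i < length W \<longrightarrow> struct_iso (fst fg) (snd fg) (W!i) (W0!i) \<and>
        (\<forall>v\<in>sIn (W!i) \<union> sOut (W!i). snum (W2!i) (fst fg v) = snum (W!i) v)"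
  proof
    fix i show "\<exists>fg. i < length W \<longrightarrow> struct_iso (fst fg) (snd fg) (W!i) (W0!i) \<and>
        (\<forall>v\<in>sIn (W!i) \<union> sOut (W!i). snum (W2!i) (fst fg v) = snum (W!i) v)"
    proof (cases "i < length W")
      case True
      have "slice_iso (W!i) (W2!i)" using wi True unfolding word_iso_def by simp
      then obtain f g where fg: "bij_betw f (sVerts (W!i)) (sVerts (W2!i))" "bij_betw g (sEdges (W!i)) (sEdges (W2!i))"
        "f ` sIn (W!i) = sIn (W2!i)" "f ` sCen (W!i) = sCen (W2!i)" "f ` sOut (W!i) = sOut (W2!i)"
        "\<forall>v\<in>sIn (W!i) \<union> sOut (W!i). snum (W2!i) (f v) = snum (W!i) v"
        "\<forall>e\<in>sEdges (W!i). stail (W2!i) (g e) = f (stail (W!i) e) \<and> shead (W2!i) (g e) = f (shead (W!i) e)"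
        by (rule slice_isoE)
      have "struct_iso f g (W!i) (W0!i)" using fg slot[OF True] unfolding struct_iso_def by simp
      thus ?thesis using fg(6) by (rule_tac x="(f,g)" in exI) simp
    qed simp
  qed
  then obtain FG where FG: "\<forall>i. i < length W \<longrightarrow> struct_iso (fst (FG i)) (snd (FG i)) (W!i) (W0!i) \<and>
        (\<forall>v\<in>sIn (W!i) \<union> sOut (W!i). snum (W2!i) (fst (FG i) v) = snum (W!i) v)"
    by metis
  define F where "F i = fst (FG i)" for i
  define G where "G i = snd (FG i)" for i
  have si: "\<forall>i<length W. struct_iso (F i) (G i) (W!i) (W0!i)" using FG unfolding F_def G_def by blast
  have nums: "\<And>i v. i < length W \<Longrightarrow> v \<in> sIn (W!i) \<union> sOut (W!i) \<Longrightarrow> snum (W2!i) (F i v) = snum (W!i) v"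
    using FG unfolding F_def by blast
  have mp: "match_pres F W W0"
    unfolding match_pres_def
  proof (intro allI impI)
    fix i x y assume i: "Suc i < length W" and x: "x \<in> sOut (W!i)" and y: "y \<in> sIn (W!Suc i)"
      and eq: "snum (W!i) x = snum (W!Suc i) y"
    have i0: "i < length W" using i by simp
    have sl0: "W0!i \<in> sgL SG ` sgV SG" "W0!Suc i \<in> sgL SG ` sgV SG"
      using slot[OF i0] slot[OF i] i len unfolding W0_def ns_def by (auto simp: lenns)
    have nS: "normalized_slice (W0!i)" "normalized_slice (W0!Suc i)"
      using norm sl0 unfolding normalized_slice_graph_def by auto
    have slS: "is_slice (W0!i)" using ud_slice[OF udW0] i0 len by simp
    have ed: "(ns2!i, ns2!Suc i) \<in> sgE (Nq q SG)" using ns2(6) i lenns by simp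
    have "gluable (sgL (Nq q SG) (ns2!i)) (sgL (Nq q SG) (ns2!Suc i))" using ed by (subst (asm) Nq_simps(5)) blast
    hence gl: "gluable (W2!i) (W2!Suc i)" using ns2(1) i lenns by simp
    have fx: "F i x \<in> sOut (W0!i)" using si_out[OF si[rule_format, OF i0] x] .
    have fy: "F (Suc i) y \<in> sIn (W0!Suc i)" using si_in[OF si[rule_format, OF i] y] .
    have e2: "snum (W2!i) (F i x) = snum (W2!Suc i) (F (Suc i) y)"
      using nums[OF i0, of x] nums[OF i, of y] x y eq by simp
    have w0i: "W0!i = sgL SG (fst (ns2!i))" "W0!Suc i = sgL SG (fst (ns2!Suc i))"
      using i lenns unfolding W0_def ns_def by simp_all
    have q1: "(fst (snd (ns2!i)), snd (snd (ns2!i))) \<in> qnumberings q (W0!i)" using slot[OF i0] w0i by simp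
    have q2: "(fst (snd (ns2!Suc i)), snd (snd (ns2!Suc i))) \<in> qnumberings q (W0!Suc i)" using slot[OF i] w0i by simp
    have r1: "W2!i = renumber (W0!i) (fst (snd (ns2!i))) (snd (snd (ns2!i)))" using slot[OF i0] by simp
    have r2: "W2!Suc i = renumber (W0!Suc i) (fst (snd (ns2!Suc i))) (snd (snd (ns2!Suc i)))" using slot[OF i] by simp
    show "snum (W0!i) (F i x) = snum (W0!Suc i) (F (Suc i) y)"
      using renum_match[OF nS(1) nS(2) slS q1 q2 gl[unfolded r1 r2] fx fy e2[unfolded r1 r2]] .
  qed
  have "digraph_iso_via (\<lambda>(i,v). (i, F i v)) (\<lambda>(i,e). (i, G i e)) (compose W) (compose W0)"
    using compose_iso(1)[OF udW udW0 len si mp] .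
  hence "digraph_iso (compose W) (compose W0)" unfolding digraph_iso_def by blast
  moreover have "compose W0 \<in> graph_lang SG" unfolding graph_lang_def using W0s by blast
  ultimately show ?thesis by blast
qed



definition idx :: "nat set \<Rightarrow> nat \<Rightarrow> nat" where
  "idx A n = the_inv_into {..<card A} (\<lambda>k. sorted_list_of_set A ! k) n"

lemma idx_bij0: "finite A \<Longrightarrow> bij_betw (\<lambda>k. sorted_list_of_set A ! k) {..<card A} A"
  by (rule bij_betw_nth) (simp_all add: distinct_sorted_list_of_set)

lemma idx_bij: "finite A \<Longrightarrow> bij_betw (idx A) A {..<card A}"
  unfolding idx_def using bij_betw_the_inv_into[OF idx_bij0] by blast

lemma idx_nth: "finite A \<Longrightarrow> n \<in> A \<Longrightarrow> sorted_list_of_set A ! idx A n = n"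
  unfolding idx_def using idx_bij0[of A] f_the_inv_into_f_bij_betw by metis

lemma idx_inj: "finite A \<Longrightarrow> m \<in> A \<Longrightarrow> n \<in> A \<Longrightarrow> idx A m = idx A n \<Longrightarrow> m = n"
  using idx_bij unfolding bij_betw_def inj_on_def by blast

lemma idx_img: "finite A \<Longrightarrow> (\<lambda>n. idx A n + 1) ` A = {1..card A}"
proof -
  assume f: "finite A"
  have "(\<lambda>n. idx A n + 1) ` A = (\<lambda>k. k + 1) ` (idx A ` A)" by (simp add: image_image)
  also have "idx A ` A = {..<card A}" using idx_bij[OF f] unfolding bij_betw_def by blast
  also have "(\<lambda>k. k + 1) ` {..<card A} = {1..card A}"
  proof
    show "(\<lambda>k. k + 1) ` {..<card A} \<subseteq> {1..card A}" by auto
    show "{1..card A} \<subseteq> (\<lambda>k. k + 1) ` {..<card A}"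
    proof
      fix x assume "x \<in> {1..card A}"
      thus "x \<in> (\<lambda>k. k + 1) ` {..<card A}" by (rule_tac x="x - 1" in image_eqI) auto
    qed
  qed
  finally show ?thesis .
qed

definition cpnum :: "('v,'e) slice \<Rightarrow> 'v \<Rightarrow> nat" where
  "cpnum S v = (if v \<in> sIn S then idx (snum S ` sIn S) (snum S v) + 1
                else if v \<in> sOut S then idx (snum S ` sOut S) (snum S v) + 1 else 0)"

definition cp :: "('v,'e) slice \<Rightarrow> ('v \<Rightarrow> nat) \<Rightarrow> ('e \<Rightarrow> nat) \<Rightarrow> (nat,nat) slice" where
  "cp S fv fe = \<lparr> sIn = fv ` sIn S, sCen = fv ` sCen S, sOut = fv ` sOut S, sEdges = fe ` sEdges S,
     stail = (\<lambda>e'. fv (stail S (inv_into (sEdges S) fe e'))),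
     shead = (\<lambda>e'. fv (shead S (inv_into (sEdges S) fe e'))),
     snum = (\<lambda>v'. cpnum S (inv_into (sVerts S) fv v')) \<rparr>"

lemma cp_simps:
  "sIn (cp S fv fe) = fv ` sIn S" "sCen (cp S fv fe) = fv ` sCen S" "sOut (cp S fv fe) = fv ` sOut S"
  "sEdges (cp S fv fe) = fe ` sEdges S" "sVerts (cp S fv fe) = fv ` sVerts S"
  unfolding cp_def sVerts_def by (simp_all add: image_Un)

lemma slice_fin_parts: "is_slice S \<Longrightarrow> finite (sIn S) \<and> finite (sCen S) \<and> finite (sOut S)"
  using slice_fin[of S] unfolding sVerts_def by (meson finite_Un)

locale cpl =
  fixes S :: "('v,'e) slice" and fv :: "'v \<Rightarrow> nat" and fe :: "'e \<Rightarrow> nat"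
  assumes sl: "is_slice S" and ifv: "inj_on fv (sVerts S)" and ife: "inj_on fe (sEdges S)"
begin

abbreviation "T \<equiv> cp S fv fe"

lemma tl: "e \<in> sEdges S \<Longrightarrow> stail T (fe e) = fv (stail S e)"
  unfolding cp_def using ife by simp
lemma hd: "e \<in> sEdges S \<Longrightarrow> shead T (fe e) = fv (shead S e)"
  unfolding cp_def using ife by simp
lemma nm: "v \<in> sVerts S \<Longrightarrow> snum T (fv v) = cpnum S v"
  unfolding cp_def using ifv by simp

lemma mem: "v \<in> sVerts S \<Longrightarrow> A \<subseteq> sVerts S \<Longrightarrow> (fv v \<in> fv ` A) = (v \<in> A)"
  using ifv by (meson inj_on_image_mem_iff)

lemma inS: "sIn S \<subseteq> sVerts S" "sCen S \<subseteq> sVerts S" "sOut S \<subseteq> sVerts S"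
  unfolding sVerts_def by blast+

lemma fins: "finite (snum S ` sIn S)" "finite (snum S ` sOut S)"
  using slice_fin_parts[OF sl] by blast+

lemma nm_in: "v \<in> sIn S \<Longrightarrow> snum T (fv v) = idx (snum S ` sIn S) (snum S v) + 1"
  using nm inS unfolding cpnum_def by auto
lemma nm_out: "v \<in> sOut S \<Longrightarrow> snum T (fv v) = idx (snum S ` sOut S) (snum S v) + 1"
proof -
  assume v: "v \<in> sOut S"
  have "v \<notin> sIn S" using v slice_disj[OF sl] by blast
  moreover have "v \<in> sVerts S" using v inS by blast
  ultimately show ?thesis using nm[of v] v unfolding cpnum_def by simp
qed

lemma si: "struct_iso fv fe S T"
  unfolding struct_iso_def
  using inj_on_imp_bij_betw[OF ifv] inj_on_imp_bij_betw[OF ife] tl hd by (simp add: cp_simps)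

lemma card_in: "card (sIn T) = card (sIn S)"
  using card_image[OF inj_on_subset[OF ifv inS(1)]] by (simp add: cp_simps)
lemma card_out: "card (sOut T) = card (sOut S)"
  using card_image[OF inj_on_subset[OF ifv inS(3)]] by (simp add: cp_simps)
lemma card_cen: "card (sCen T) = card (sCen S)"
  using card_image[OF inj_on_subset[OF ifv inS(2)]] by (simp add: cp_simps)

lemma inj_num_in: "inj_on (snum S) (sIn S)" and inj_num_out: "inj_on (snum S) (sOut S)"
  using sl unfolding is_slice_def by blast+

lemma card_num_in: "card (snum S ` sIn S) = card (sIn S)"
  using card_image[OF inj_num_in] .
lemma card_num_out: "card (snum S ` sOut S) = card (sOut S)"
  using card_image[OF inj_num_out] .

lemma img_in: "snum T ` sIn T = {1..card (sIn T)}"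
proof -
  have "snum T ` sIn T = (\<lambda>v. idx (snum S ` sIn S) (snum S v) + 1) ` sIn S"
    unfolding cp_simps image_image by (rule image_cong[OF refl]) (simp add: nm_in)
  also have "\<dots> = (\<lambda>n. idx (snum S ` sIn S) n + 1) ` (snum S ` sIn S)" by (simp add: image_image)
  also have "\<dots> = {1..card (sIn T)}" using idx_img[OF fins(1)] card_num_in card_in by simp
  finally show ?thesis .
qed

lemma img_out: "snum T ` sOut T = {1..card (sOut T)}"
proof -
  have "snum T ` sOut T = (\<lambda>v. idx (snum S ` sOut S) (snum S v) + 1) ` sOut S"
    unfolding cp_simps image_image by (rule image_cong[OF refl]) (simp add: nm_out)
  also have "\<dots> = (\<lambda>n. idx (snum S ` sOut S) n + 1) ` (snum S ` sOut S)" by (simp add: image_image)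
  also have "\<dots> = {1..card (sOut T)}" using idx_img[OF fins(2)] card_num_out card_out by simp
  finally show ?thesis .
qed

lemma normalized: "normalized_slice T"
  unfolding normalized_slice_def using img_in img_out by blast

lemma is_slice_T: "is_slice T"
proof -
  have sf: "finite (sVerts S)" "finite (sEdges S)" using slice_fin[OF sl] by blast+
  have h1: "finite (sVerts T)" "finite (sEdges T)" using sf by (simp_all add: cp_simps)
  have d: "sIn S \<inter> sCen S = {}" "sIn S \<inter> sOut S = {}" "sCen S \<inter> sOut S = {}" using slice_disj[OF sl] by blast+
  have h2: "sIn T \<inter> sCen T = {}" "sIn T \<inter> sOut T = {}" "sCen T \<inter> sOut T = {}"
    unfolding cp_simps using d inj_on_image_Int[OF ifv] inS by (metis image_empty)+
  have h3: "\<forall>e'\<in>sEdges T. stail T e' \<in> sVerts T \<and> shead T e' \<in> sVerts T"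
    unfolding cp_simps using tl hd slice_ends[OF sl] by auto
  have h4: "\<forall>v'\<in>sIn T \<union> sOut T. card {e'\<in>sEdges T. stail T e' = v' \<or> shead T e' = v'} = 1"
  proof
    fix v' assume "v' \<in> sIn T \<union> sOut T"
    then obtain v where v: "v \<in> sIn S \<union> sOut S" "v' = fv v" unfolding cp_simps by blast
    have vV: "v \<in> sVerts S" using v inS by blast
    have "{e'\<in>sEdges T. stail T e' = v' \<or> shead T e' = v'} = fe ` {e\<in>sEdges S. stail S e = v \<or> shead S e = v}"
    proof
      show "{e'\<in>sEdges T. stail T e' = v' \<or> shead T e' = v'} \<subseteq> fe ` {e\<in>sEdges S. stail S e = v \<or> shead S e = v}"
      proof
        fix e' assume "e' \<in> {e'\<in>sEdges T. stail T e' = v' \<or> shead T e' = v'}"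
        then obtain e where e: "e \<in> sEdges S" "e' = fe e" "fv (stail S e) = fv v \<or> fv (shead S e) = fv v"
          unfolding cp_simps using tl hd v(2) by auto
        have "stail S e \<in> sVerts S" "shead S e \<in> sVerts S" using slice_ends[OF sl e(1)] by blast+
        hence "stail S e = v \<or> shead S e = v" using e(3) ifv vV by (meson inj_onD)
        thus "e' \<in> fe ` {e\<in>sEdges S. stail S e = v \<or> shead S e = v}" using e by blast
      qed
      show "fe ` {e\<in>sEdges S. stail S e = v \<or> shead S e = v} \<subseteq> {e'\<in>sEdges T. stail T e' = v' \<or> shead T e' = v'}"
        unfolding cp_simps using tl hd v(2) by auto
    qed
    moreover have "card (fe ` {e\<in>sEdges S. stail S e = v \<or> shead S e = v}) = card {e\<in>sEdges S. stail S e = v \<or> shead S e = v}"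
      by (rule card_image) (rule inj_on_subset[OF ife], blast)
    moreover have "card {e\<in>sEdges S. stail S e = v \<or> shead S e = v} = 1"
      using sl v(1) unfolding is_slice_def by blast
    ultimately show "card {e'\<in>sEdges T. stail T e' = v' \<or> shead T e' = v'} = 1" by simp
  qed
  have h5: "\<forall>e'\<in>sEdges T. \<not> (stail T e' \<in> sIn T \<and> shead T e' \<in> sIn T) \<and> \<not> (stail T e' \<in> sOut T \<and> shead T e' \<in> sOut T)"
  proof
    fix e' assume "e' \<in> sEdges T"
    then obtain e where e: "e \<in> sEdges S" "e' = fe e" unfolding cp_simps by blast
    have ev: "stail S e \<in> sVerts S" "shead S e \<in> sVerts S" using slice_ends[OF sl e(1)] by blast+
    show "\<not> (stail T e' \<in> sIn T \<and> shead T e' \<in> sIn T) \<and> \<not> (stail T e' \<in> sOut T \<and> shead T e' \<in> sOut T)"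
      unfolding cp_simps e(2) tl[OF e(1)] hd[OF e(1)] mem[OF ev(1) inS(1)] mem[OF ev(2) inS(1)]
        mem[OF ev(1) inS(3)] mem[OF ev(2) inS(3)]
      using slice_no_inin[OF sl e(1)] slice_no_outout[OF sl e(1)] by blast
  qed
  have h6: "inj_on (snum T) (sIn T)"
  proof (rule inj_onI)
    fix a b assume a: "a \<in> sIn T" and b: "b \<in> sIn T" and eq: "snum T a = snum T b"
    obtain x where x: "x \<in> sIn S" "a = fv x" using a unfolding cp_simps by blast
    obtain y where y: "y \<in> sIn S" "b = fv y" using b unfolding cp_simps by blast
    have "idx (snum S ` sIn S) (snum S x) = idx (snum S ` sIn S) (snum S y)" using eq x y nm_in by simp
    hence "snum S x = snum S y" using idx_inj[OF fins(1)] x y by blast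
    thus "a = b" using x y inj_num_in unfolding inj_on_def by blast
  qed
  have h7: "inj_on (snum T) (sOut T)"
  proof (rule inj_onI)
    fix a b assume a: "a \<in> sOut T" and b: "b \<in> sOut T" and eq: "snum T a = snum T b"
    obtain x where x: "x \<in> sOut S" "a = fv x" using a unfolding cp_simps by blast
    obtain y where y: "y \<in> sOut S" "b = fv y" using b unfolding cp_simps by blast
    have "idx (snum S ` sOut S) (snum S x) = idx (snum S ` sOut S) (snum S y)" using eq x y nm_out by simp
    hence "snum S x = snum S y" using idx_inj[OF fins(2)] x y by blast
    thus "a = b" using x y inj_num_out unfolding inj_on_def by blast
  qed
  have h8: "\<forall>v\<in>sIn T \<union> sOut T. 1 \<le> snum T v"
    unfolding cp_simps using nm_in nm_out by auto
  show ?thesis unfolding is_slice_def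
    apply (intro conjI)
    apply (rule h1(1)) apply (rule h1(2)) apply (rule h2(1)) apply (rule h2(2)) apply (rule h2(3))
    apply (rule h3) apply (rule h4) apply (rule h5) apply (rule h6) apply (rule h7) apply (rule h8)
    done
qed

lemma unit: "unit_slice S \<Longrightarrow> unit_slice T"
  unfolding unit_slice_def using is_slice_T card_cen by simp

lemma width: "slice_width T = slice_width S"
  unfolding slice_width_def using card_in card_out by simp

lemma sigma:
  assumes "unit_slice S" "slice_width S \<le> c" "snum S ` (sIn S \<union> sOut S) \<subseteq> {1..q}"
  shows "T \<in> Sigma c q"
proof -
  have "card (sIn S) \<le> q"
  proof -
    have "card (snum S ` sIn S) \<le> card {1..q}" using assms(3) by (intro card_mono) auto
    thus ?thesis using card_num_in by simp
  qed
  moreover have "card (sOut S) \<le> q"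
  proof -
    have "card (snum S ` sOut S) \<le> card {1..q}" using assms(3) by (intro card_mono) auto
    thus ?thesis using card_num_out by simp
  qed
  ultimately have "snum T ` (sIn T \<union> sOut T) \<subseteq> {1..q}" using img_in img_out card_in card_out
    by (auto simp: image_Un)
  thus ?thesis unfolding Sigma_def using unit[OF assms(1)] width assms(2) by simp
qed

end



context cpl begin
lemma hd_ex: "x \<in> sVerts S \<Longrightarrow> (\<exists>e'\<in>sEdges T. shead T e' = fv x) \<longleftrightarrow> (\<exists>e\<in>sEdges S. shead S e = x)"
proof
  assume x: "x \<in> sVerts S" and "\<exists>e'\<in>sEdges T. shead T e' = fv x"
  then obtain e where e: "e \<in> sEdges S" "fv (shead S e) = fv x" using hd unfolding cp_simps by auto
  have "shead S e \<in> sVerts S" using slice_ends[OF sl e(1)] by blast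
  hence "shead S e = x" using e(2) x ifv by (meson inj_onD)
  thus "\<exists>e\<in>sEdges S. shead S e = x" using e by blast
next
  assume "\<exists>e\<in>sEdges S. shead S e = x"
  then obtain e where "e \<in> sEdges S" "shead S e = x" by blast
  thus "\<exists>e'\<in>sEdges T. shead T e' = fv x" using hd unfolding cp_simps by blast
qed
lemma tl_ex: "x \<in> sVerts S \<Longrightarrow> (\<exists>e'\<in>sEdges T. stail T e' = fv x) \<longleftrightarrow> (\<exists>e\<in>sEdges S. stail S e = x)"
proof
  assume x: "x \<in> sVerts S" and "\<exists>e'\<in>sEdges T. stail T e' = fv x"
  then obtain e where e: "e \<in> sEdges S" "fv (stail S e) = fv x" using tl unfolding cp_simps by auto
  have "stail S e \<in> sVerts S" using slice_ends[OF sl e(1)] by blast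
  hence "stail S e = x" using e(2) x ifv by (meson inj_onD)
  thus "\<exists>e\<in>sEdges S. stail S e = x" using e by blast
next
  assume "\<exists>e\<in>sEdges S. stail S e = x"
  then obtain e where "e \<in> sEdges S" "stail S e = x" by blast
  thus "\<exists>e'\<in>sEdges T. stail T e' = fv x" using tl unfolding cp_simps by blast
qed
end

lemma ex_inj_nat: "finite A \<Longrightarrow> \<exists>f :: 'a \<Rightarrow> nat. inj_on f A"
  using ex_bij_betw_finite_nat unfolding bij_betw_def by blast

lemma normalize_word:
  fixes W :: "('v,'e) slice list"
  assumes ud: "is_unit_decomp W" and wc: "\<forall>S\<in>set W. slice_width S \<le> c"
    and nq: "\<forall>S\<in>set W. snum S ` (sIn S \<union> sOut S) \<subseteq> {1..q}"
  shows "\<exists>(W0 :: (nat,nat) slice list) F G. is_unit_decomp W0 \<and> set W0 \<subseteq> Sigma c q \<and> normalized_word W0 \<and>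
     length W0 = length W \<and> (\<forall>i<length W. struct_iso (F i) (G i) (W!i) (W0!i)) \<and> match_pres F W W0 \<and>
     (\<forall>i<length W. \<forall>v\<in>sIn (W!i). snum (W0!i) (F i v) = idx (snum (W!i) ` sIn (W!i)) (snum (W!i) v) + 1) \<and>
     (\<forall>i<length W. \<forall>v\<in>sOut (W!i). snum (W0!i) (F i v) = idx (snum (W!i) ` sOut (W!i)) (snum (W!i) v) + 1)"
proof -
  have "\<forall>i. \<exists>fv :: 'v \<Rightarrow> nat. i < length W \<longrightarrow> inj_on fv (sVerts (W!i))"
    using ex_inj_nat slice_fin ud_slice[OF ud] by metis
  then obtain FV where FV: "\<forall>i. i < length W \<longrightarrow> inj_on (FV i :: 'v \<Rightarrow> nat) (sVerts (W!i))" by metis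
  have "\<forall>i. \<exists>fe :: 'e \<Rightarrow> nat. i < length W \<longrightarrow> inj_on fe (sEdges (W!i))"
    using ex_inj_nat slice_fin ud_slice[OF ud] by metis
  then obtain FE where FE: "\<forall>i. i < length W \<longrightarrow> inj_on (FE i :: 'e \<Rightarrow> nat) (sEdges (W!i))" by metis
  have C: "\<And>i. i < length W \<Longrightarrow> cpl (W!i) (FV i) (FE i)"
    unfolding cpl_def using FV FE ud_slice[OF ud] by blast
  define W0 where "W0 = map (\<lambda>i. cp (W!i) (FV i) (FE i)) [0..<length W]"
  have len: "length W0 = length W" unfolding W0_def by simp
  have W0i: "\<And>i. i < length W \<Longrightarrow> W0!i = cp (W!i) (FV i) (FE i)" unfolding W0_def by simp
  have us: "\<And>i. i < length W \<Longrightarrow> unit_slice (W!i)" using ud unfolding is_unit_decomp_def by auto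
  have ne: "W \<noteq> []" using ud_ne[OF ud] .
  have glue: "\<And>i. Suc i < length W \<Longrightarrow> gluable (W0!i) (W0!Suc i)"
  proof -
    fix i assume i: "Suc i < length W"
    have i0: "i < length W" using i by simp
    interpret A: cpl "W!i" "FV i" "FE i" using C[OF i0] .
    interpret B: cpl "W!Suc i" "FV (Suc i)" "FE (Suc i)" using C[OF i] .
    have gl: "gluable (W!i) (W!Suc i)" using ud_glue[OF ud i] .
    have AB: "snum (W!i) ` sOut (W!i) = snum (W!Suc i) ` sIn (W!Suc i)" using gluable_nums[OF gl] .
    have "card (sOut (W!i)) = card (sIn (W!Suc i))" using AB A.card_num_out B.card_num_in by metis
    hence nums: "snum (W0!i) ` sOut (W0!i) = snum (W0!Suc i) ` sIn (W0!Suc i)"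
      using A.img_out B.img_in A.card_out B.card_in W0i[OF i0] W0i[OF i] by simp
    have orient: "\<forall>x'\<in>sOut (W0!i). \<forall>y'\<in>sIn (W0!Suc i). snum (W0!i) x' = snum (W0!Suc i) y' \<longrightarrow>
        ((\<exists>e\<in>sEdges (W0!i). shead (W0!i) e = x') \<longleftrightarrow> (\<exists>e\<in>sEdges (W0!Suc i). stail (W0!Suc i) e = y'))"
    proof (intro ballI impI)
      fix x' y' assume x': "x' \<in> sOut (W0!i)" and y': "y' \<in> sIn (W0!Suc i)" and eq: "snum (W0!i) x' = snum (W0!Suc i) y'"
      obtain x where x: "x \<in> sOut (W!i)" "x' = FV i x" using x' W0i[OF i0] by (auto simp: cp_simps)
      obtain y where y: "y \<in> sIn (W!Suc i)" "y' = FV (Suc i) y" using y' W0i[OF i] by (auto simp: cp_simps)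
      have "idx (snum (W!i) ` sOut (W!i)) (snum (W!i) x) = idx (snum (W!Suc i) ` sIn (W!Suc i)) (snum (W!Suc i) y)"
        using eq x y A.nm_out B.nm_in W0i[OF i0] W0i[OF i] by simp
      moreover have "snum (W!i) x \<in> snum (W!i) ` sOut (W!i)" using x(1) by blast
      moreover have "snum (W!Suc i) y \<in> snum (W!i) ` sOut (W!i)" using y(1) AB by blast
      ultimately have "snum (W!i) x = snum (W!Suc i) y" using idx_inj[OF A.fins(2)] AB by metis
      hence o: "(\<exists>e\<in>sEdges (W!i). shead (W!i) e = x) \<longleftrightarrow> (\<exists>e\<in>sEdges (W!Suc i). stail (W!Suc i) e = y)"
        using gluable_orient[OF gl x(1) y(1)] by simp
      have xv: "x \<in> sVerts (W!i)" using x A.inS by blast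
      have yv: "y \<in> sVerts (W!Suc i)" using y B.inS by blast
      show "(\<exists>e\<in>sEdges (W0!i). shead (W0!i) e = x') \<longleftrightarrow> (\<exists>e\<in>sEdges (W0!Suc i). stail (W0!Suc i) e = y')"
        using A.hd_ex[OF xv] B.tl_ex[OF yv] o x(2) y(2) W0i[OF i0] W0i[OF i] by simp
    qed
    show "gluable (W0!i) (W0!Suc i)" unfolding gluable_def using nums orient by blast
  qed
  have "is_unit_decomp W0"
  proof -
    have "W0 \<noteq> []" using ne len by auto
    moreover have "\<forall>S\<in>set W0. unit_slice S"
    proof
      fix S assume "S \<in> set W0"
      then obtain i where i: "i < length W" "S = W0!i" using len by (metis in_set_conv_nth)
      interpret A: cpl "W!i" "FV i" "FE i" using C[OF i(1)] .
      show "unit_slice S" using A.unit[OF us[OF i(1)]] i W0i by simp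
    qed
    moreover have "initial_slice (hd W0)"
    proof -
      have "W0 \<noteq> []" using ne len by auto
      hence "hd W0 = W0!0" by (simp add: hd_conv_nth)
      hence "hd W0 = cp (W!0) (FV 0) (FE 0)" using W0i[of 0] ne by simp
      moreover have "sIn (W!0) = {}" using ud_init[OF ud] ne unfolding initial_slice_def by (simp add: hd_conv_nth)
      ultimately show ?thesis unfolding initial_slice_def by (simp add: cp_simps)
    qed
    moreover have "final_slice (last W0)"
    proof -
      have "W0 \<noteq> []" using ne len by auto
      hence "last W0 = W0!(length W - 1)" using len by (simp add: last_conv_nth)
      hence "last W0 = cp (W!(length W - 1)) (FV (length W - 1)) (FE (length W - 1))"
        using W0i[of "length W - 1"] ne by simp
      moreover have "sOut (W!(length W - 1)) = {}" using ud_final[OF ud] ne unfolding final_slice_def by (simp add: last_conv_nth)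
      ultimately show ?thesis unfolding final_slice_def by (simp add: cp_simps)
    qed
    moreover have "\<forall>i. Suc i < length W0 \<longrightarrow> gluable (W0!i) (W0!Suc i)" using glue len by simp
    ultimately show ?thesis unfolding is_unit_decomp_def by blast
  qed
  moreover have "set W0 \<subseteq> Sigma c q \<and> normalized_word W0"
  proof -
    have "\<forall>S\<in>set W0. S \<in> Sigma c q \<and> normalized_slice S"
    proof
      fix S assume "S \<in> set W0"
      then obtain i where i: "i < length W" "S = W0!i" using len by (metis in_set_conv_nth)
      interpret A: cpl "W!i" "FV i" "FE i" using C[OF i(1)] .
      have "W!i \<in> set W" using i(1) by simp
      hence "A.T \<in> Sigma c q" using A.sigma[OF us[OF i(1)]] wc nq by blast
      thus "S \<in> Sigma c q \<and> normalized_slice S" using A.normalized i W0i by simp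
    qed
    thus ?thesis unfolding normalized_word_def by blast
  qed
  moreover have "\<forall>i<length W. struct_iso (FV i) (FE i) (W!i) (W0!i)"
  proof (intro allI impI)
    fix i assume i: "i < length W"
    interpret A: cpl "W!i" "FV i" "FE i" using C[OF i] .
    show "struct_iso (FV i) (FE i) (W!i) (W0!i)" using A.si W0i[OF i] by simp
  qed
  moreover have "\<forall>i<length W. \<forall>v\<in>sIn (W!i). snum (W0!i) (FV i v) = idx (snum (W!i) ` sIn (W!i)) (snum (W!i) v) + 1"
  proof (intro allI impI ballI)
    fix i v assume i: "i < length W" and v: "v \<in> sIn (W!i)"
    interpret A: cpl "W!i" "FV i" "FE i" using C[OF i] .
    show "snum (W0!i) (FV i v) = idx (snum (W!i) ` sIn (W!i)) (snum (W!i) v) + 1" using A.nm_in[OF v] W0i[OF i] by simp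
  qed
  moreover have "\<forall>i<length W. \<forall>v\<in>sOut (W!i). snum (W0!i) (FV i v) = idx (snum (W!i) ` sOut (W!i)) (snum (W!i) v) + 1"
  proof (intro allI impI ballI)
    fix i v assume i: "i < length W" and v: "v \<in> sOut (W!i)"
    interpret A: cpl "W!i" "FV i" "FE i" using C[OF i] .
    show "snum (W0!i) (FV i v) = idx (snum (W!i) ` sOut (W!i)) (snum (W!i) v) + 1" using A.nm_out[OF v] W0i[OF i] by simp
  qed
  moreover have "match_pres FV W W0"
    unfolding match_pres_def
  proof (intro allI impI)
    fix i x y assume i: "Suc i < length W" and x: "x \<in> sOut (W!i)" and y: "y \<in> sIn (W!Suc i)"
      and eq: "snum (W!i) x = snum (W!Suc i) y"
    have i0: "i < length W" using i by simp
    interpret A: cpl "W!i" "FV i" "FE i" using C[OF i0] .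
    interpret B: cpl "W!Suc i" "FV (Suc i)" "FE (Suc i)" using C[OF i] .
    have AB: "snum (W!i) ` sOut (W!i) = snum (W!Suc i) ` sIn (W!Suc i)" using gluable_nums[OF ud_glue[OF ud i]] .
    show "snum (W0!i) (FV i x) = snum (W0!Suc i) (FV (Suc i) y)"
      using A.nm_out[OF x] B.nm_in[OF y] W0i[OF i0] W0i[OF i] AB eq by simp
  qed
  ultimately show ?thesis using len by blast
qed



lemma si_imgs: "struct_iso f g S T \<Longrightarrow> f ` sIn S = sIn T \<and> f ` sCen S = sCen T \<and> f ` sOut S = sOut T"
  unfolding struct_iso_def by (elim conjE) (intro conjI; assumption)

lemma si_comp: "struct_iso f g S T \<Longrightarrow> struct_iso f' g' T U \<Longrightarrow> struct_iso (f' \<circ> f) (g' \<circ> g) S U"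
proof -
  assume a: "struct_iso f g S T" and b: "struct_iso f' g' T U"
  have "bij_betw (f' \<circ> f) (sVerts S) (sVerts U)" "bij_betw (g' \<circ> g) (sEdges S) (sEdges U)"
    using a b unfolding struct_iso_def by (meson bij_betw_trans)+
  moreover have "f ` sIn S = sIn T" "f ` sCen S = sCen T" "f ` sOut S = sOut T"
    "f' ` sIn T = sIn U" "f' ` sCen T = sCen U" "f' ` sOut T = sOut U"
    using si_imgs[OF a] si_imgs[OF b] by simp_all
  hence "(f' \<circ> f) ` sIn S = sIn U" "(f' \<circ> f) ` sCen S = sCen U" "(f' \<circ> f) ` sOut S = sOut U"
    by (simp_all only: image_comp[symmetric])
  moreover have "\<forall>e\<in>sEdges S. stail U ((g' \<circ> g) e) = (f' \<circ> f) (stail S e) \<and> shead U ((g' \<circ> g) e) = (f' \<circ> f) (shead S e)"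
    using si_edge[OF a] si_tail[OF a] si_head[OF a] si_tail[OF b] si_head[OF b] by simp
  ultimately show ?thesis unfolding struct_iso_def by blast
qed

lemma si_renum: "struct_iso f g S T \<Longrightarrow> struct_iso f g S (renumber T a b)"
  unfolding struct_iso_def by simp

lemma slice_iso_si: "slice_iso S T \<Longrightarrow> \<exists>f g. struct_iso f g S T \<and> (\<forall>v\<in>sIn S \<union> sOut S. snum T (f v) = snum S v)"
proof -
  assume "slice_iso S T"
  then obtain f g where fg: "bij_betw f (sVerts S) (sVerts T)" "bij_betw g (sEdges S) (sEdges T)"
      "f ` sIn S = sIn T" "f ` sCen S = sCen T" "f ` sOut S = sOut T"
      "\<forall>v\<in>sIn S \<union> sOut S. snum T (f v) = snum S v"
      "\<forall>e\<in>sEdges S. stail T (g e) = f (stail S e) \<and> shead T (g e) = f (shead S e)"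
    by (rule slice_isoE)
  hence "struct_iso f g S T" unfolding struct_iso_def by blast
  thus ?thesis using fg(6) by blast
qed

lemma si_slice_iso: "struct_iso f g S T \<Longrightarrow> (\<forall>v\<in>sIn S \<union> sOut S. snum T (f v) = snum S v) \<Longrightarrow> slice_iso S T"
  unfolding slice_iso_def
  apply (rule exI[of _ f], rule exI[of _ g])
  unfolding struct_iso_def by blast

lemma si_card_in: "struct_iso f g S T \<Longrightarrow> card (sIn T) = card (sIn S)"
proof -
  assume a: "struct_iso f g S T"
  have "inj_on f (sVerts S)" using a unfolding struct_iso_def bij_betw_def by blast
  hence "inj_on f (sIn S)" by (rule inj_on_subset) (auto simp: sVerts_def)
  moreover have "f ` sIn S = sIn T" using a unfolding struct_iso_def by blast
  ultimately show ?thesis by (metis card_image)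
qed
lemma si_card_out: "struct_iso f g S T \<Longrightarrow> card (sOut T) = card (sOut S)"
proof -
  assume a: "struct_iso f g S T"
  have "inj_on f (sVerts S)" using a unfolding struct_iso_def bij_betw_def by blast
  hence "inj_on f (sOut S)" by (rule inj_on_subset) (auto simp: sVerts_def)
  moreover have "f ` sOut S = sOut T" using a unfolding struct_iso_def by blast
  ultimately show ?thesis by (metis card_image)
qed

lemma si_hd_ex:
  assumes s: "struct_iso f g S T" and sl: "is_slice S" and x: "x \<in> sVerts S"
  shows "(\<exists>e'\<in>sEdges T. shead T e' = f x) \<longleftrightarrow> (\<exists>e\<in>sEdges S. shead S e = x)"
proof
  assume "\<exists>e'\<in>sEdges T. shead T e' = f x"
  then obtain e' where e': "e' \<in> sEdges T" "shead T e' = f x" by blast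
  have "sEdges T = g ` sEdges S" using s unfolding struct_iso_def bij_betw_def by (elim conjE) simp
  then obtain e where e: "e \<in> sEdges S" "e' = g e" using e' by blast
  have "f (shead S e) = f x" using si_head[OF s e(1)] e e' by simp
  moreover have "shead S e \<in> sVerts S" using slice_ends[OF sl e(1)] by blast
  moreover have "inj_on f (sVerts S)" using s unfolding struct_iso_def bij_betw_def by blast
  ultimately have "shead S e = x" using x by (meson inj_onD)
  thus "\<exists>e\<in>sEdges S. shead S e = x" using e by blast
next
  assume "\<exists>e\<in>sEdges S. shead S e = x"
  then obtain e where "e \<in> sEdges S" "shead S e = x" by blast
  thus "\<exists>e'\<in>sEdges T. shead T e' = f x" using si_edge[OF s] si_head[OF s] by blast
qed

lemma si_tl_ex:
  assumes s: "struct_iso f g S T" and sl: "is_slice S" and x: "x \<in> sVerts S"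
  shows "(\<exists>e'\<in>sEdges T. stail T e' = f x) \<longleftrightarrow> (\<exists>e\<in>sEdges S. stail S e = x)"
proof
  assume "\<exists>e'\<in>sEdges T. stail T e' = f x"
  then obtain e' where e': "e' \<in> sEdges T" "stail T e' = f x" by blast
  have "sEdges T = g ` sEdges S" using s unfolding struct_iso_def bij_betw_def by (elim conjE) simp
  then obtain e where e: "e \<in> sEdges S" "e' = g e" using e' by blast
  have "f (stail S e) = f x" using si_tail[OF s e(1)] e e' by simp
  moreover have "stail S e \<in> sVerts S" using slice_ends[OF sl e(1)] by blast
  moreover have "inj_on f (sVerts S)" using s unfolding struct_iso_def bij_betw_def by blast
  ultimately have "stail S e = x" using x by (meson inj_onD)
  thus "\<exists>e\<in>sEdges S. stail S e = x" using e by blast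
next
  assume "\<exists>e\<in>sEdges S. stail S e = x"
  then obtain e where "e \<in> sEdges S" "stail S e = x" by blast
  thus "\<exists>e'\<in>sEdges T. stail T e' = f x" using si_edge[OF s] si_tail[OF s] by blast
qed

lemma gluable_transfer:
  assumes gl: "gluable S T" and slS: "is_slice S" and slT: "is_slice T"
    and a: "struct_iso f g S S'" "\<forall>v\<in>sIn S \<union> sOut S. snum S' (f v) = snum S v"
    and b: "struct_iso f' g' T T'" "\<forall>v\<in>sIn T \<union> sOut T. snum T' (f' v) = snum T v"
  shows "gluable S' T'"
proof -
  have oS: "sOut S' = f ` sOut S" using a(1) unfolding struct_iso_def by blast
  have iT: "sIn T' = f' ` sIn T" using b(1) unfolding struct_iso_def by blast
  have "snum S' ` sOut S' = snum S ` sOut S"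
    unfolding oS image_image by (rule image_cong[OF refl]) (use a(2) in blast)
  moreover have "snum T' ` sIn T' = snum T ` sIn T"
    unfolding iT image_image by (rule image_cong[OF refl]) (use b(2) in blast)
  ultimately have nums: "snum S' ` sOut S' = snum T' ` sIn T'" using gluable_nums[OF gl] by simp
  have orient: "\<forall>x'\<in>sOut S'. \<forall>y'\<in>sIn T'. snum S' x' = snum T' y' \<longrightarrow>
        ((\<exists>e\<in>sEdges S'. shead S' e = x') \<longleftrightarrow> (\<exists>e\<in>sEdges T'. stail T' e = y'))"
  proof (intro ballI impI)
    fix x' y' assume x': "x' \<in> sOut S'" and y': "y' \<in> sIn T'" and eq: "snum S' x' = snum T' y'"
    obtain x where x: "x \<in> sOut S" "x' = f x" using x' oS by blast
    obtain y where y: "y \<in> sIn T" "y' = f' y" using y' iT by blast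
    have "snum S x = snum T y" using eq x y a(2) b(2) by simp
    hence o: "(\<exists>e\<in>sEdges S. shead S e = x) \<longleftrightarrow> (\<exists>e\<in>sEdges T. stail T e = y)"
      using gluable_orient[OF gl x(1) y(1)] by simp
    have xv: "x \<in> sVerts S" using x unfolding sVerts_def by blast
    have yv: "y \<in> sVerts T" using y unfolding sVerts_def by blast
    show "(\<exists>e\<in>sEdges S'. shead S' e = x') \<longleftrightarrow> (\<exists>e\<in>sEdges T'. stail T' e = y')"
      using si_hd_ex[OF a(1) slS xv] si_tl_ex[OF b(1) slT yv] o x(2) y(2) by simp
  qed
  show ?thesis unfolding gluable_def using nums orient by blast
qed



lemma L_sub_R:
  fixes W :: "('v,'e) slice list" and U :: "('v,'e) slice list" and SG :: "('n,'v2,'e2) slice_graph"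
    and H :: "(nat \<times> 'v2, nat \<times> 'e2) digraph"
  assumes udU: "is_unit_decomp U" and normU: "normalized_word U" and wq: "word_width U = q"
    and ztU: "z_topological z (compose U) (centers U)"
    and sat: "normalized_dilated_saturated z c q SG"
    and Ws: "W \<in> sub_unit_decomps c U"
    and Hl: "H \<in> graph_lang SG" and iso: "digraph_iso (compose W) H"
  shows "\<exists>W2\<in>slang (Nq q SG). word_iso W W2"
proof -
  have sub: "sub_unit_decomp W U" and wwc: "word_width W \<le> c" using Ws unfolding sub_unit_decomps_def by blast+
  have udW: "is_unit_decomp W" and len: "length W = length U" and ss: "\<forall>i<length W. sub_slice (W!i) (U!i)"
    using sub unfolding sub_unit_decomp_def by auto
  have neW: "W \<noteq> []" using ud_ne[OF udW] .
  have wc: "\<forall>S\<in>set W. slice_width S \<le> c"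
  proof
    fix S assume "S \<in> set W"
    hence "slice_width S \<le> Max (slice_width ` set W)" by (intro Max_ge) auto
    thus "slice_width S \<le> c" using wwc unfolding word_width_def by simp
  qed
  have nq: "\<forall>S\<in>set W. snum S ` (sIn S \<union> sOut S) \<subseteq> {1..q}"
  proof
    fix S assume "S \<in> set W"
    then obtain i where i: "i < length W" "S = W!i" by (metis in_set_conv_nth)
    note p = sub_slice_parts[OF ss[rule_format, OF i(1)]]
    have Ui: "U!i \<in> set U" using i len by simp
    have nU: "normalized_slice (U!i)" using normU Ui unfolding normalized_word_def by blast
    have "slice_width (U!i) \<le> Max (slice_width ` set U)" using Ui by (intro Max_ge) auto
    hence wU: "slice_width (U!i) \<le> q" using wq unfolding word_width_def by simp
    have A1: "snum (U!i) ` sIn (U!i) \<subseteq> {1..q}" using nU wU unfolding normalized_slice_def slice_width_def by auto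
    have A2: "snum (U!i) ` sOut (U!i) \<subseteq> {1..q}" using nU wU unfolding normalized_slice_def slice_width_def by auto
    have e: "snum S = snum (U!i)" using p(4) i(2) by simp
    have B1: "snum (U!i) ` sIn S \<subseteq> snum (U!i) ` sIn (U!i)" using p(5) i(2) by (intro image_mono) simp
    have B2: "snum (U!i) ` sOut S \<subseteq> snum (U!i) ` sOut (U!i)" using p(7) i(2) by (intro image_mono) simp
    have "snum S ` sIn S \<subseteq> {1..q}" unfolding e using subset_trans[OF B1 A1] .
    moreover have "snum S ` sOut S \<subseteq> {1..q}" unfolding e using subset_trans[OF B2 A2] .
    ultimately show "snum S ` (sIn S \<union> sOut S) \<subseteq> {1..q}" unfolding image_Un by (rule Un_least)
  qed
  obtain W0 :: "(nat,nat) slice list" and F G where W0: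
    "is_unit_decomp W0" "set W0 \<subseteq> Sigma c q" "normalized_word W0" "length W0 = length W"
    "\<forall>i<length W. struct_iso (F i) (G i) (W!i) (W0!i)" "match_pres F W W0"
    "\<forall>i<length W. \<forall>v\<in>sIn (W!i). snum (W0!i) (F i v) = idx (snum (W!i) ` sIn (W!i)) (snum (W!i) v) + 1"
    "\<forall>i<length W. \<forall>v\<in>sOut (W!i). snum (W0!i) (F i v) = idx (snum (W!i) ` sOut (W!i)) (snum (W!i) v) + 1"
    using normalize_word[OF udW wc nq] by blast
  have sgo: "slice_graph_over c q SG" and nSG: "normalized_slice_graph SG"
    and satc: "\<forall>H\<in>graph_lang SG. \<forall>ord. z_topological z H ord \<longrightarrow>
        (\<forall>W :: (nat,nat) slice list. is_unit_decomp W \<and> set W \<subseteq> Sigma c q \<and> normalized_word W \<and>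
            compatible W H ord \<longrightarrow> (\<exists>W'\<in>slang SG. word_iso W W'))"
    using sat unfolding normalized_dilated_saturated_def by blast+
  have sg: "is_slice_graph SG" using sgo unfolding slice_graph_over_def by blast
  define Psi where "Psi = (\<lambda>(i,v). (i, F i v))"
  define Gam where "Gam = (\<lambda>(i,e). (i, G i e))"
  have ps: "digraph_iso_via Psi Gam (compose W) (compose W0)"
    unfolding Psi_def Gam_def using compose_iso(1)[OF udW W0(1,4,5,6)] .
  have cW: "map Psi (centers W) = centers W0"
    unfolding Psi_def using compose_iso(2)[OF udW W0(1,4,5,6)] .
  obtain f g where h: "digraph_iso_via f g (compose W) H" using iso unfolding digraph_iso_def by blast
  have dgW: "is_digraph (compose W)" using compose_digraph[OF udW] .
  note inv = iso_inv[OF dgW ps]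
  note comp = iso_comp[OF inv h]
  define ord where "ord = map (f \<circ> inv_into (dV (compose W)) Psi) (centers W0)"
  have ordeq: "ord = map f (centers W)"
  proof -
    have injP: "inj_on Psi (dV (compose W))" using ps unfolding digraph_iso_via_def bij_betw_def by blast
    have "ord = map (f \<circ> inv_into (dV (compose W)) Psi \<circ> Psi) (centers W)" unfolding ord_def cW[symmetric] by simp
    also have "\<dots> = map f (centers W)"
    proof (rule map_cong[OF refl])
      fix x assume "x \<in> set (centers W)"
      hence "x \<in> dV (compose W)" using centers_in_dV[OF udW] by blast
      thus "(f \<circ> inv_into (dV (compose W)) Psi \<circ> Psi) x = f x" using injP by simp
    qed
    finally show ?thesis .
  qed
  have ztW: "z_topological z (compose W) (centers W)" using ztop_restrict[OF sub udU ztU] .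
  have ztH: "z_topological z H ord" unfolding ordeq using ztop_push[OF dgW h ztW] .
  have compat: "compatible W0 H ord" unfolding compatible_def ord_def using comp by blast
  obtain W' where W': "W' \<in> slang SG" "word_iso W0 W'"
    using satc Hl ztH W0(1,2,3) compat by blast
  obtain ns where ns: "W' = map (sgL SG) ns" "ns \<noteq> []" "hd ns \<in> sgI SG" "last ns \<in> sgF SG"
    "set ns \<subseteq> sgV SG" "\<forall>j. Suc j < length ns \<longrightarrow> (ns!j, ns!Suc j) \<in> sgE SG"
    using W'(1) unfolding slang_def by blast
  define n where "n = length W"
  have lW': "length W' = n" using W'(2) W0(4) unfolding word_iso_def n_def by simp
  have lns: "length ns = n" using lW' ns(1) by simp
  define ins where "ins i = sorted_list_of_set (snum (W!i) ` sIn (W!i))" for i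
  define outs where "outs i = sorted_list_of_set (snum (W!i) ` sOut (W!i))" for i
  define ns2 where "ns2 = map (\<lambda>i. (ns!i, ins i, outs i)) [0..<n]"
  define W2 where "W2 = map (sgL (Nq q SG)) ns2"
  have lns2: "length ns2 = n" unfolding ns2_def by simp
  have lW2: "length W2 = n" unfolding W2_def using lns2 by simp
  have W'i: "\<And>i. i < n \<Longrightarrow> W'!i = sgL SG (ns!i)" using ns(1) lns by simp
  have W2i: "\<And>i. i < n \<Longrightarrow> W2!i = renumber (W'!i) (ins i) (outs i)"
    unfolding W2_def ns2_def using W'i by (simp add: Nq_simps(4))
  have nsV: "\<And>i. i < n \<Longrightarrow> ns!i \<in> sgV SG" using ns(5) lns by auto
  have slW': "\<And>i. i < n \<Longrightarrow> is_slice (W'!i)"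
    using sg nsV W'i unfolding is_slice_graph_def unit_slice_def by auto
  have finW: "\<And>i. i < n \<Longrightarrow> finite (snum (W!i) ` sIn (W!i)) \<and> finite (snum (W!i) ` sOut (W!i))"
    using slice_fin_parts ud_slice[OF udW] unfolding n_def by blast
  have Ci: "\<And>i. i < n \<Longrightarrow> \<exists>f g. struct_iso f g (W!i) (W2!i) \<and> (\<forall>v\<in>sIn (W!i) \<union> sOut (W!i). snum (W2!i) (f v) = snum (W!i) v)"
  proof -
    fix i assume i: "i < n"
    have i': "i < length W" using i n_def by simp
    have "slice_iso (W0!i) (W'!i)" using W'(2) i' W0(4) unfolding word_iso_def by simp
    then obtain f2 g2 where fg2: "struct_iso f2 g2 (W0!i) (W'!i)" "\<forall>v\<in>sIn (W0!i) \<union> sOut (W0!i). snum (W'!i) (f2 v) = snum (W0!i) v"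
      using slice_iso_si by blast
    have sF: "struct_iso (F i) (G i) (W!i) (W0!i)" using W0(5) i' by blast
    have s: "struct_iso (f2 \<circ> F i) (g2 \<circ> G i) (W!i) (W2!i)" using si_renum[OF si_comp[OF sF fg2(1)]] W2i[OF i] by simp
    have nm: "\<forall>v\<in>sIn (W!i) \<union> sOut (W!i). snum (W2!i) ((f2 \<circ> F i) v) = snum (W!i) v"
    proof
      fix v assume v: "v \<in> sIn (W!i) \<union> sOut (W!i)"
      show "snum (W2!i) ((f2 \<circ> F i) v) = snum (W!i) v"
      proof (cases "v \<in> sIn (W!i)")
        case True
        have a: "F i v \<in> sIn (W0!i)" using si_in[OF sF True] .
        have b: "f2 (F i v) \<in> sIn (W'!i)" using si_in[OF fg2(1) a] .
        have "snum (W2!i) (f2 (F i v)) = ins i ! (snum (W'!i) (f2 (F i v)) - 1)" using W2i[OF i] renumber_in[OF b] by simp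
        also have "\<dots> = ins i ! (snum (W0!i) (F i v) - 1)" using fg2(2) a by simp
        also have "\<dots> = ins i ! idx (snum (W!i) ` sIn (W!i)) (snum (W!i) v)" using W0(7) i' True by simp
        also have "\<dots> = snum (W!i) v" unfolding ins_def using idx_nth finW[OF i] True by blast
        finally show ?thesis by simp
      next
        case False
        hence vo: "v \<in> sOut (W!i)" using v by blast
        have a: "F i v \<in> sOut (W0!i)" using si_out[OF sF vo] .
        have b: "f2 (F i v) \<in> sOut (W'!i)" using si_out[OF fg2(1) a] .
        have b': "f2 (F i v) \<notin> sIn (W'!i)" using b slice_disj[OF slW'[OF i]] by blast
        have "snum (W2!i) (f2 (F i v)) = outs i ! (snum (W'!i) (f2 (F i v)) - 1)" using W2i[OF i] renumber_out[OF b b'] by simp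
        also have "\<dots> = outs i ! (snum (W0!i) (F i v) - 1)" using fg2(2) a by simp
        also have "\<dots> = outs i ! idx (snum (W!i) ` sOut (W!i)) (snum (W!i) v)" using W0(8) i' vo by simp
        also have "\<dots> = snum (W!i) v" unfolding outs_def using idx_nth finW[OF i] vo by blast
        finally show ?thesis by simp
      qed
    qed
    show "\<exists>f g. struct_iso f g (W!i) (W2!i) \<and> (\<forall>v\<in>sIn (W!i) \<union> sOut (W!i). snum (W2!i) (f v) = snum (W!i) v)"
      using s nm by blast
  qed
  have wi: "word_iso W W2"
    unfolding word_iso_def using lW2 n_def Ci si_slice_iso by metis
  have inV: "\<And>i. i < n \<Longrightarrow> ns2!i \<in> sgV (Nq q SG)"
  proof -
    fix i assume i: "i < n"
    obtain f0 g0 where s: "struct_iso f0 g0 (W!i) (W2!i)" using Ci[OF i] by blast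
    have sl: "is_slice (W!i)" using ud_slice[OF udW] i n_def by simp
    have c1: "card (sIn (W'!i)) = card (sIn (W!i))" using si_card_in[OF s] W2i[OF i] by simp
    have c2: "card (sOut (W'!i)) = card (sOut (W!i))" using si_card_out[OF s] W2i[OF i] by simp
    have inj1: "inj_on (snum (W!i)) (sIn (W!i))" and inj2: "inj_on (snum (W!i)) (sOut (W!i))"
      using sl unfolding is_slice_def by blast+
    have ci: "card (snum (W!i) ` sIn (W!i)) = card (sIn (W!i))" using card_image[OF inj1] .
    have co: "card (snum (W!i) ` sOut (W!i)) = card (sOut (W!i))" using card_image[OF inj2] .
    have WiS: "W!i \<in> set W" using i n_def by simp
    have "(ins i, outs i) \<in> qnumberings q (sgL SG (ns!i))"
      unfolding qnumberings_def ins_def outs_def W'i[OF i, symmetric]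
      using finW[OF i] c1 c2 ci co nq WiS by (auto simp: strict_sorted_list_of_set)
    thus "ns2!i \<in> sgV (Nq q SG)" unfolding ns2_def Nq_simps(1) using i nsV[OF i] by simp
  qed
  have "W2 \<in> slang (Nq q SG)"
    unfolding slang_def
  proof (intro CollectI exI conjI)
    show "W2 = map (sgL (Nq q SG)) ns2" unfolding W2_def ..
    have n0: "0 < n" using neW n_def by simp
    show ne2: "ns2 \<noteq> []" using n0 lns2 by auto
    have "hd ns2 = ns2!0" using ne2 by (rule hd_conv_nth)
    moreover have "fst (ns2!0) = hd ns" using n0 lns ns(2) unfolding ns2_def by (simp add: hd_conv_nth)
    ultimately show "hd ns2 \<in> sgI (Nq q SG)" using inV[OF n0] ns(3) unfolding Nq_simps(2) by simp
    have nl: "n - 1 < n" using n0 by simp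
    have "last ns2 = ns2!(length ns2 - 1)" using ne2 by (rule last_conv_nth)
    hence "last ns2 = ns2!(n-1)" using lns2 by simp
    moreover have "fst (ns2!(n-1)) = last ns" using n0 lns ns(2) unfolding ns2_def by (simp add: last_conv_nth)
    ultimately show "last ns2 \<in> sgF (Nq q SG)" using inV[OF nl] ns(4) unfolding Nq_simps(3) by simp
    show "set ns2 \<subseteq> sgV (Nq q SG)" using inV lns2 by (metis in_set_conv_nth subsetI)
    show "\<forall>j. Suc j < length ns2 \<longrightarrow> (ns2!j, ns2!Suc j) \<in> sgE (Nq q SG)"
    proof (intro allI impI)
      fix j assume j: "Suc j < length ns2"
      hence j1: "Suc j < n" and j0: "j < n" using lns2 by simp_all
      have e: "(ns!j, ns!Suc j) \<in> sgE SG" using ns(6) j1 lns by simp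
      have gl: "gluable (W!j) (W!Suc j)" using ud_glue[OF udW] j1 n_def by simp
      have sl0: "is_slice (W!j)" "is_slice (W!Suc j)" using ud_slice[OF udW] j0 j1 n_def by simp_all
      obtain fa ga where a: "struct_iso fa ga (W!j) (W2!j)" "\<forall>v\<in>sIn (W!j) \<union> sOut (W!j). snum (W2!j) (fa v) = snum (W!j) v"
        using Ci[OF j0] by blast
      obtain fb gb where b: "struct_iso fb gb (W!Suc j) (W2!Suc j)" "\<forall>v\<in>sIn (W!Suc j) \<union> sOut (W!Suc j). snum (W2!Suc j) (fb v) = snum (W!Suc j) v"
        using Ci[OF j1] by blast
      have "gluable (W2!j) (W2!Suc j)" using gluable_transfer[OF gl sl0 a b] .
      hence "gluable (sgL (Nq q SG) (ns2!j)) (sgL (Nq q SG) (ns2!Suc j))" unfolding W2_def using j by simp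
      moreover have "fst (ns2!j) = ns!j" "fst (ns2!Suc j) = ns!Suc j" unfolding ns2_def using j0 j1 by simp_all
      ultimately show "(ns2!j, ns2!Suc j) \<in> sgE (Nq q SG)"
        using inV[OF j0] inV[OF j1] e by (subst Nq_simps(5)) simp
    qed
  qed
  thus ?thesis using wi by blast
qed



theorem theorem5:
  fixes G :: "('a,'b) digraph"
    and U :: "('v,'e) slice list"
    and SG :: "('n,'v2,'e2) slice_graph"
    and SUB :: "('m,'v,'e) slice_graph"
    and z c q :: nat
  assumes "is_digraph G"
    and "is_unit_decomp_of U G"
    and "normalized_word U"
    and "word_width U = q"
    and "zigzag_le z U"
    and "normalized_dilated_saturated z c q SG"
    and "is_slice_graph SUB"
    and "slang SUB = sub_unit_decomps c U"
  shows "{W \<in> sub_unit_decomps c U. \<exists>H\<in>graph_lang SG. digraph_iso (compose W) H}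
         = {W \<in> slang SUB. \<exists>W'\<in>slang (Nq q SG). word_iso W W'}"
proof -
  have udU: "is_unit_decomp U" using assms(2) unfolding is_unit_decomp_of_def by blast
  obtain ord where ord: "z_topological z (compose U) ord" "compatible U (compose U) ord"
    using assms(5) unfolding zigzag_le_def by blast
  obtain phi gam where pg: "digraph_iso_via phi gam (compose U) (compose U)" "map phi (centers U) = ord"
    using ord(2) unfolding compatible_def by blast
  have dgU: "is_digraph (compose U)" using compose_digraph[OF udU] .
  have zt1: "z_topological z (compose U) (map (inv_into (dV (compose U)) phi) ord)"
    using ztop_push[OF dgU iso_inv[OF dgU pg(1)] ord(1)] .
  have "map (inv_into (dV (compose U)) phi) ord = centers U"
  proof -
    have injP: "inj_on phi (dV (compose U))" using pg(1) unfolding digraph_iso_via_def bij_betw_def by blast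
    have "map (inv_into (dV (compose U)) phi) ord = map (inv_into (dV (compose U)) phi \<circ> phi) (centers U)"
      unfolding pg(2)[symmetric] by simp
    also have "\<dots> = centers U"
    proof (rule map_idI)
      fix x assume "x \<in> set (centers U)"
      hence "x \<in> dV (compose U)" using centers_in_dV[OF udU] by blast
      thus "(inv_into (dV (compose U)) phi \<circ> phi) x = x" using injP by simp
    qed
    finally show ?thesis .
  qed
  hence ztU: "z_topological z (compose U) (centers U)" using zt1 by simp
  have sg: "is_slice_graph SG" and nSG: "normalized_slice_graph SG"
    using assms(6) unfolding normalized_dilated_saturated_def slice_graph_over_def by blast+
  show ?thesis
  proof
    show "{W \<in> sub_unit_decomps c U. \<exists>H\<in>graph_lang SG. digraph_iso (compose W) H}
         \<subseteq> {W \<in> slang SUB. \<exists>W'\<in>slang (Nq q SG). word_iso W W'}"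
    proof
      fix W assume "W \<in> {W \<in> sub_unit_decomps c U. \<exists>H\<in>graph_lang SG. digraph_iso (compose W) H}"
      then obtain H where W: "W \<in> sub_unit_decomps c U" "H \<in> graph_lang SG" "digraph_iso (compose W) H" by blast
      have "\<exists>W2\<in>slang (Nq q SG). word_iso W W2"
        using L_sub_R[OF udU assms(3,4) ztU assms(6) W] .
      thus "W \<in> {W \<in> slang SUB. \<exists>W'\<in>slang (Nq q SG). word_iso W W'}" using W(1) assms(8) by blast
    qed
    show "{W \<in> slang SUB. \<exists>W'\<in>slang (Nq q SG). word_iso W W'}
         \<subseteq> {W \<in> sub_unit_decomps c U. \<exists>H\<in>graph_lang SG. digraph_iso (compose W) H}"
    proof
      fix W assume "W \<in> {W \<in> slang SUB. \<exists>W'\<in>slang (Nq q SG). word_iso W W'}"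
      then obtain W2 where W: "W \<in> slang SUB" "W2 \<in> slang (Nq q SG)" "word_iso W W2" by blast
      have Ws: "W \<in> sub_unit_decomps c U" using W(1) assms(8) by simp
      hence udW: "is_unit_decomp W" unfolding sub_unit_decomps_def sub_unit_decomp_def by blast
      have "\<exists>H\<in>graph_lang SG. digraph_iso (compose W) H" using R_sub_L[OF sg nSG udW W(2,3)] .
      thus "W \<in> {W \<in> sub_unit_decomps c U. \<exists>H\<in>graph_lang SG. digraph_iso (compose W) H}" using Ws by blast
    qed
  qed
qed


end
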